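(* Let $n\in\{2,3\}$ and, for $r>0$, let $B(r)\subset\mathbb R^n$ denote the open ball of radius $r$ centred at the origin. Let $0<r_1<r_2<r_3$ and set \[ \alpha:=\frac{\log(r_3)-\log(r_2)}{\log(r_3)-\log(r_1)}\in(0,1). \] Then: (i) for every function $u$ harmonic in $B(r_3)$ (i.e. $\Delta u=0$ in $B(r_3)$) there holds \[ \|u\|_{L^2(B(r_2))}\le \|u\|_{L^2(B(r_1))}^{\alpha}\,\|u\|_{L^2(B(r_3))}^{1-\alpha}; \] (ii) the exponent $\alpha$ is optimal: there do not exist $\tilde\alpha>\alpha$ and a constant $C>0$ such that \[ \|u\|_{L^2(B(r_2))}\le C\,\|u\|_{L^2(B(r_1))}^{\tilde\alpha}\,\|u\|_{L^2(B(r_3))}^{1-\tilde\alpha} \] holds for all functions $u$ harmonic on $\mathbb R^n$.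
   Context: Equivalently $\alpha=\beta/(1+\beta)$ with $\beta=\frac{\log r_3-\log r_2}{\log r_2-\log r_1}$. Norms are standard $L^2$ norms on the indicated balls. *)

theory Defs
  imports "HOL-Analysis.Analysis"
begin

definition partial_deriv :: "('a::euclidean_space \<Rightarrow> real) \<Rightarrow> 'a \<Rightarrow> 'a \<Rightarrow> real" where
  "partial_deriv u b x = frechet_derivative u (at x) b"

definition laplacian :: "('a::euclidean_space \<Rightarrow> real) \<Rightarrow> 'a \<Rightarrow> real" where
  "laplacian u x = (\<Sum>b\<in>Basis. partial_deriv (partial_deriv u b) b x)"

definition harmonic_on :: "'a::euclidean_space set \<Rightarrow> ('a \<Rightarrow> real) \<Rightarrow> bool" where
  "harmonic_on S u \<longleftrightarrow>
     open S \<and> u differentiable_on S \<and>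
     (\<forall>b\<in>Basis. partial_deriv u b differentiable_on S) \<and>
     (\<forall>b\<in>Basis. \<forall>c\<in>Basis. continuous_on S (partial_deriv (partial_deriv u b) c)) \<and>
     (\<forall>x\<in>S. laplacian u x = 0)"

definition L2_ball :: "('a::euclidean_space \<Rightarrow> real) \<Rightarrow> real \<Rightarrow> real" where
  "L2_ball u r = sqrt (LINT x:ball 0 r|lborel. (u x)^2)"

end

theory Submission
  imports Defs
begin

lemma translate_integral:
  fixes G :: "'a::euclidean_space \<Rightarrow> real"
  assumes cG: "continuous_on UNIV G" and sG: "\<And>x. x \<notin> cball 0 R \<Longrightarrow> G x = 0"
  shows "((\<lambda>x. G (x + c)) has_integral integral UNIV G) UNIV"
proof -
  obtain a where a: "cball (0::'a) R \<subseteq> cbox (-a) a"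
    using bounded_subset_cbox_symmetric[OF bounded_cball] by blast
  have "G integrable_on cbox (-a) a"
    using cG by (auto intro: integrable_continuous continuous_on_subset)
  then have hI: "(G has_integral integral (cbox (-a) a) G) (cbox (-a) a)" by blast
  have hU: "(G has_integral integral (cbox (-a) a) G) UNIV"
  proof (rule has_integral_on_superset[OF hI])
    fix x assume "x \<notin> cbox (-a) a" then have "x \<notin> cball 0 R" using a by blast
    then show "G x = 0" by (rule sG)
  qed auto
  then have eq: "integral UNIV G = integral (cbox (-a) a) G" by blast
  from has_integral_affinity[OF hI, of 1 c]
  have h2: "((\<lambda>x. G (x + c)) has_integral integral (cbox (-a) a) G) ((\<lambda>x. x - c) ` cbox (-a) a)"
    by (simp add: algebra_simps)
  show ?thesis unfolding eq
  proof (rule has_integral_on_superset[OF h2])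
    fix x assume "x \<notin> (\<lambda>x. x - c) ` cbox (- a) a"
    then have "x + c \<notin> cbox (-a) a" by (metis add_diff_cancel image_eqI)
    then show "G (x + c) = 0" using a sG by blast
  qed auto
qed

lemma ibp_dir:
  fixes G g :: "'a::euclidean_space \<Rightarrow> real"
  assumes dG: "\<And>x. ((\<lambda>t. G (x + t *\<^sub>R v)) has_real_derivative g x) (at 0)"
    and cg: "continuous_on UNIV g" and cG: "continuous_on UNIV G"
    and sG: "\<And>x. x \<notin> cball 0 R \<Longrightarrow> G x = 0" and sg: "\<And>x. x \<notin> cball 0 R \<Longrightarrow> g x = 0"
  shows "integral UNIV g = 0"
proof -
  obtain a where a: "cball (0::'a) (R + norm v) \<subseteq> cbox (-a) a"
    using bounded_subset_cbox_symmetric[OF bounded_cball] by blast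
  define U where "U = {-1<..<(1::real)}"
  have d1: "((\<lambda>t. G (x + t *\<^sub>R v)) has_field_derivative g (x + t0 *\<^sub>R v)) (at t0 within U)" for x t0
  proof -
    have "((\<lambda>s. G ((x + t0 *\<^sub>R v) + s *\<^sub>R v)) has_field_derivative g (x + t0 *\<^sub>R v)) (at 0)"
      using dG by blast
    then have "((\<lambda>s. G (x + (s + t0) *\<^sub>R v)) has_field_derivative g (x + t0 *\<^sub>R v)) (at 0)"
      by (simp add: algebra_simps scaleR_add_left)
    then have "((\<lambda>t. G (x + t *\<^sub>R v)) has_field_derivative g (x + t0 *\<^sub>R v)) (at (0 + t0))"
      using DERIV_shift[where f="\<lambda>t. G (x + t *\<^sub>R v)"] by blast
    then show ?thesis by (simp add: has_field_derivative_at_within)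
  qed
  have cG': "continuous_on UNIV (\<lambda>x. G (x + t *\<^sub>R v))" for t
    by (rule continuous_on_compose2[OF cG]) (auto intro!: continuous_intros)
  have int1: "(\<lambda>x. G (x + t *\<^sub>R v)) integrable_on cbox (-a) a" for t
    by (rule integrable_continuous, rule continuous_on_subset[OF cG']) auto
  have cont: "continuous_on (U \<times> cbox (-a) a) (\<lambda>(t, x). g (x + t *\<^sub>R v))"
  proof -
    have "continuous_on (U \<times> cbox (-a) a) (\<lambda>p. g (snd p + fst p *\<^sub>R v))"
      by (rule continuous_on_compose2[OF cg]) (auto intro!: continuous_intros)
    then show ?thesis by (simp add: split_beta)
  qed
  have L: "((\<lambda>t. integral (cbox (-a) a) (\<lambda>x. G (x + t *\<^sub>R v))) has_field_derivative
            integral (cbox (-a) a) (\<lambda>x. g (x + 0 *\<^sub>R v))) (at 0 within U)"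
    by (rule leibniz_rule_field_derivative[OF d1 int1 cont]) (auto simp: U_def)
  have const: "integral (cbox (-a) a) (\<lambda>x. G (x + t *\<^sub>R v)) = integral UNIV G" if "t \<in> U" for t
  proof -
    have "((\<lambda>x. G (x + t *\<^sub>R v)) has_integral integral UNIV G) UNIV"
      by (rule translate_integral[OF cG sG])
    moreover have "G (x + t *\<^sub>R v) = 0" if "x \<notin> cbox (-a) a" for x
    proof -
      have "x \<notin> cball 0 (R + norm v)" using that a by blast
      then have "norm x > R + norm v" by auto
      moreover have "norm (t *\<^sub>R v) \<le> norm v" using \<open>t \<in> U\<close> by (auto simp: U_def intro: mult_left_le_one_le)
      ultimately have "norm (x + t *\<^sub>R v) > R" using norm_triangle_ineq4[of x "- (t *\<^sub>R v)"]
        by (smt (verit) norm_diff_ineq norm_minus_cancel)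
      then show ?thesis using sG by auto
    qed
    ultimately have "((\<lambda>x. G (x + t *\<^sub>R v)) has_integral integral UNIV G) (cbox (-a) a)"
      using has_integral_restrict_UNIV[of "cbox (-a) a" "\<lambda>x. G (x + t *\<^sub>R v)"]
      by (smt (verit, best) has_integral_cong)
    then show ?thesis by blast
  qed
  have "open U" by (simp add: U_def)
  have L': "((\<lambda>t. integral (cbox (-a) a) (\<lambda>x. G (x + t *\<^sub>R v))) has_field_derivative
            integral (cbox (-a) a) g) (at 0)"
    using L at_within_open[OF _ \<open>open U\<close>, of 0] by (simp add: U_def)
  have "((\<lambda>t. integral UNIV G) has_field_derivative integral (cbox (-a) a) g) (at 0)"
    by (rule has_field_derivative_transform_within_open[OF L' \<open>open U\<close>]) (auto simp: U_def const)
  then have "integral (cbox (-a) a) g = 0"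
    using DERIV_unique DERIV_const by blast
  moreover have "integral UNIV g = integral (cbox (-a) a) g"
  proof -
    have "g integrable_on cbox (-a) a" using cg by (auto intro: integrable_continuous continuous_on_subset)
    then have "(g has_integral integral (cbox (-a) a) g) UNIV"
    proof (rule has_integral_on_superset[OF integrable_integral])
      fix x assume "x \<notin> cbox (-a) a" then have "x \<notin> cball 0 (R + norm v)" using a by blast
      then have "x \<notin> cball 0 R" by (smt (verit) mem_cball_0 norm_ge_zero)
      then show "g x = 0" by (rule sg)
    qed auto
    then show ?thesis by blast
  qed
  ultimately show ?thesis by simp
qed

definition dd :: "('a::euclidean_space \<Rightarrow> real) \<Rightarrow> 'a \<Rightarrow> 'a \<Rightarrow> real" where
  "dd u y h = (\<Sum>b\<in>Basis. (h \<bullet> b) * partial_deriv u b y)"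

lemma lin_expand:
  fixes F :: "'a::euclidean_space \<Rightarrow> real"
  assumes "linear F"
  shows "F h = (\<Sum>b\<in>Basis. (h \<bullet> b) * F b)"
proof -
  have "F h = F (\<Sum>b\<in>Basis. (h \<bullet> b) *\<^sub>R b)" by (simp add: euclidean_representation)
  also have "\<dots> = (\<Sum>b\<in>Basis. (h \<bullet> b) * F b)"
    using assms by (simp add: linear_sum linear_cmul)
  finally show ?thesis .
qed

lemma frechet_dd:
  assumes "u differentiable (at y)"
  shows "frechet_derivative u (at y) (c *\<^sub>R h) = c * dd u y h"
proof -
  have l: "linear (frechet_derivative u (at y))" using assms by (rule linear_frechet_derivative)
  have "frechet_derivative u (at y) (c *\<^sub>R h) = c * frechet_derivative u (at y) h"
    using l by (simp add: linear_cmul)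
  also have "frechet_derivative u (at y) h = dd u y h"
    unfolding dd_def partial_deriv_def by (rule lin_expand[OF l])
  finally show ?thesis .
qed

lemma chain_dir:
  fixes f :: "'a::euclidean_space \<Rightarrow> real"
  assumes "f differentiable (at (g t0))" "(g has_vector_derivative g') (at t0 within T)"
  shows "((\<lambda>t. f (g t)) has_real_derivative frechet_derivative f (at (g t0)) g') (at t0 within T)"
proof -
  have f: "(f has_derivative frechet_derivative f (at (g t0))) (at (g t0))"
    using assms(1) frechet_derivative_works by blast
  have l: "linear (frechet_derivative f (at (g t0)))" using assms(1) by (rule linear_frechet_derivative)
  have g: "(g has_derivative (\<lambda>t. t *\<^sub>R g')) (at t0 within T)"
    using assms(2) by (simp add: has_vector_derivative_def)
  have "((\<lambda>t. f (g t)) has_derivative (\<lambda>t. frechet_derivative f (at (g t0)) (t *\<^sub>R g'))) (at t0 within T)"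
    using diff_chain_within[OF g has_derivative_at_withinI[OF f]] by (simp add: o_def)
  moreover have "(\<lambda>t. frechet_derivative f (at (g t0)) (t *\<^sub>R g')) = (*) (frechet_derivative f (at (g t0)) g')"
    using l by (auto simp: linear_cmul fun_eq_iff)
  ultimately show ?thesis by (simp add: has_field_derivative_def)
qed

lemma harm_facts:
  assumes "harmonic_on S u" "y \<in> S" "b \<in> Basis"
  shows "u differentiable (at y)" "partial_deriv u b differentiable (at y)"
    "continuous_on S u" "continuous_on S (partial_deriv u b)"
    "continuous_on S (partial_deriv (partial_deriv u b) b)" "laplacian u y = 0" "open S"
  using assms unfolding harmonic_on_def
  by (auto simp: differentiable_on_eq_differentiable_at differentiable_imp_continuous_on)

lemma glue1:
  fixes f :: "'a::euclidean_space \<Rightarrow> real"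
  assumes "continuous_on (ball 0 1) f" "\<And>x. B < x \<bullet> x \<Longrightarrow> f x = 0" "B < 1"
  shows "continuous_on UNIV f"
proof -
  have o: "open {x::'a. B < x \<bullet> x}"
    by (rule open_Collect_less) (auto intro!: continuous_intros)
  have c2: "continuous_on {x::'a. B < x \<bullet> x} f"
    using continuous_on_const[of _ 0] continuous_on_cong assms(2) by (smt (verit) mem_Collect_eq)
  have "x \<in> ball 0 1 \<or> B < x \<bullet> x" for x :: 'a
  proof (cases "B < x \<bullet> x")
    case False
    then have "norm x ^ 2 < 1" using assms(3) by (simp add: power2_norm_eq_inner)
    then have "norm x < 1" by (smt (verit) norm_ge_zero one_le_power)
    then show ?thesis by auto
  qed auto
  then have "ball 0 1 \<union> {x::'a. B < x \<bullet> x} = UNIV" by blast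
  then show ?thesis using continuous_on_open_Un[OF open_ball o assms(1) c2] by simp
qed

lemma glue2:
  fixes f :: "real \<times> 'a::euclidean_space \<Rightarrow> real"
  assumes "continuous_on (U \<times> ball 0 1) f" "\<And>t x. t \<in> U \<Longrightarrow> B < x \<bullet> x \<Longrightarrow> f (t, x) = 0" "B < 1"
  shows "continuous_on (U \<times> UNIV) f"
proof -
  have o: "open {x::'a. B < x \<bullet> x}"
    by (rule open_Collect_less) (auto intro!: continuous_intros)
  have c2: "continuous_on (U \<times> {x::'a. B < x \<bullet> x}) f"
    using continuous_on_const[of _ 0] continuous_on_cong assms(2) by (smt (verit) SigmaE mem_Collect_eq)
  have "x \<in> ball 0 1 \<or> B < x \<bullet> x" for x :: 'a
  proof (cases "B < x \<bullet> x")
    case False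
    then have "norm x ^ 2 < 1" using assms(3) by (simp add: power2_norm_eq_inner)
    then have "norm x < 1" by (smt (verit) norm_ge_zero one_le_power)
    then show ?thesis by auto
  qed auto
  then have un: "(U \<times> ball 0 1) \<union> (U \<times> {x::'a. B < x \<bullet> x}) = U \<times> UNIV" by blast
  have o1: "openin (top_of_set (U \<times> UNIV)) (U \<times> ball (0::'a) 1)"
    by (intro openin_Times openin_subtopology_self) auto
  have o2: "openin (top_of_set (U \<times> UNIV)) (U \<times> {x::'a. B < x \<bullet> x})"
    by (intro openin_Times openin_subtopology_self) (auto intro: o)
  show ?thesis using continuous_on_Un_local_open[of "U \<times> ball 0 1" "U \<times> {x::'a. B < x \<bullet> x}" f] o1 o2 assms(1) c2
    unfolding un by blast
qed

lemma cbox_UNIV_int: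
  fixes f :: "'a::euclidean_space \<Rightarrow> real"
  assumes "continuous_on UNIV f" "\<And>x. x \<notin> cball 0 1 \<Longrightarrow> f x = 0" "cball 0 1 \<subseteq> cbox (-c) c"
  shows "integral (cbox (-c) c) f = integral UNIV f" "(f has_integral integral UNIV f) UNIV"
proof -
  have "f integrable_on cbox (-c) c" using assms(1) by (auto intro: integrable_continuous continuous_on_subset)
  then have "(f has_integral integral (cbox (-c) c) f) UNIV"
  proof (rule has_integral_on_superset[OF integrable_integral])
    fix x assume "x \<notin> cbox (-c) c" then have "x \<notin> cball 0 1" using assms(3) by blast
    then show "f x = 0" by (rule assms(2))
  qed auto
  then show "integral (cbox (-c) c) f = integral UNIV f" "(f has_integral integral UNIV f) UNIV"
    by (auto simp: integral_unique)
qed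

lemma nice_ball:
  fixes x :: "'a::real_normed_vector"
  assumes "x \<in> ball 0 1" "\<bar>t\<bar> \<le> r" "0 < r"
  shows "t *\<^sub>R x \<in> ball 0 r"
proof -
  have "norm x < 1" using assms(1) by auto
  have "norm (t *\<^sub>R x) = \<bar>t\<bar> * norm x" by simp
  also have "\<dots> \<le> r * norm x" using assms(2) by (simp add: mult_right_mono)
  also have "\<dots> < r" using \<open>norm x < 1\<close> assms(3) by simp
  finally show ?thesis by simp
qed

lemma out_ball_w:
  fixes x :: "'a::real_inner"
  assumes "x \<notin> ball 0 1" "B < 1"
  shows "B < x \<bullet> x"
proof -
  have "1 \<le> norm x" using assms by auto
  then have "1 \<le> norm x ^ 2" by (simp add: one_le_power)
  then show ?thesis using assms(2) by (simp add: power2_norm_eq_inner)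
qed

lemma deriv_pair:
  fixes u :: "'a::euclidean_space \<Rightarrow> real" and w :: "real \<Rightarrow> real"
  assumes harm: "harmonic_on (ball 0 r) u" and r: "0 < r"
    and wc: "continuous_on UNIV w" and ws: "\<And>s. B \<le> s \<Longrightarrow> w s = 0" and B: "B < 1"
    and U: "convex U" "\<tau>0 \<in> U"
    and ad: "\<And>\<tau>. \<tau> \<in> U \<Longrightarrow> (a has_real_derivative a' \<tau>) (at \<tau> within U)"
    and ac: "continuous_on U a'" and ar: "\<And>\<tau>. \<tau> \<in> U \<Longrightarrow> \<bar>a \<tau>\<bar> \<le> r"
    and bd: "\<And>\<tau>. \<tau> \<in> U \<Longrightarrow> (b has_real_derivative b' \<tau>) (at \<tau> within U)"
    and bc: "continuous_on U b'" and br: "\<And>\<tau>. \<tau> \<in> U \<Longrightarrow> \<bar>b \<tau>\<bar> \<le> r"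
  shows "((\<lambda>\<tau>. integral UNIV (\<lambda>x. w (x \<bullet> x) * u (a \<tau> *\<^sub>R x) * u (b \<tau> *\<^sub>R x))) has_real_derivative
     integral UNIV (\<lambda>x. w (x \<bullet> x) * (a' \<tau>0 * dd u (a \<tau>0 *\<^sub>R x) x * u (b \<tau>0 *\<^sub>R x)
        + u (a \<tau>0 *\<^sub>R x) * (b' \<tau>0 * dd u (b \<tau>0 *\<^sub>R x) x)))) (at \<tau>0 within U)"
proof -
  define K where "K = (\<lambda>\<tau> x. w (x \<bullet> x) * u (a \<tau> *\<^sub>R x) * u (b \<tau> *\<^sub>R x))"
  define K' where "K' = (\<lambda>\<tau> x. w (x \<bullet> x) * (a' \<tau> * dd u (a \<tau> *\<^sub>R x) x * u (b \<tau> *\<^sub>R x)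
        + u (a \<tau> *\<^sub>R x) * (b' \<tau> * dd u (b \<tau> *\<^sub>R x) x)))"
  obtain c where box: "cball (0::'a) 1 \<subseteq> cbox (-c) c"
    using bounded_subset_cbox_symmetric[OF bounded_cball] by blast
  have acont: "continuous_on U a"
    using ad by (meson DERIV_continuous continuous_on_eq_continuous_within)
  have bcont: "continuous_on U b"
    using bd by (meson DERIV_continuous continuous_on_eq_continuous_within)
  have uc: "continuous_on (ball 0 r) u" using harm unfolding harmonic_on_def
    by (simp add: differentiable_imp_continuous_on)
  have pc: "continuous_on (ball 0 r) (partial_deriv u e)" if "e \<in> Basis" for e
    using harm that unfolding harmonic_on_def by (simp add: differentiable_imp_continuous_on)
  have udiff: "u differentiable (at y)" if "y \<in> ball 0 r" for y
    using harm that unfolding harmonic_on_def by (simp add: differentiable_on_eq_differentiable_at)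
  have wz: "w (x \<bullet> x) = 0" if "x \<notin> ball 0 1" for x :: 'a
    using ws out_ball_w[OF that B] by simp
  have cj: "continuous_on (U \<times> ball 0 1) (\<lambda>p. u (h (fst p) *\<^sub>R snd p))"
    if hc: "continuous_on U h" and hr: "\<And>\<tau>. \<tau> \<in> U \<Longrightarrow> \<bar>h \<tau>\<bar> \<le> r" for h
  proof (rule continuous_on_compose2[OF uc])
    have "continuous_on (U \<times> ball (0::'a) 1) (\<lambda>p. h (fst p))"
      by (rule continuous_on_compose2[OF hc continuous_on_fst]) auto
    then show "continuous_on (U \<times> ball (0::'a) 1) (\<lambda>p. h (fst p) *\<^sub>R snd p)"
      by (intro continuous_on_scaleR continuous_on_snd continuous_on_id)
    show "(\<lambda>p. h (fst p) *\<^sub>R snd p) ` (U \<times> ball (0::'a) 1) \<subseteq> ball 0 r"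
      using nice_ball[OF _ hr r] by (auto simp: image_subset_iff)
  qed
  have cjp: "continuous_on (U \<times> ball 0 1) (\<lambda>p. partial_deriv u e (h (fst p) *\<^sub>R snd p))"
    if hc: "continuous_on U h" and hr: "\<And>\<tau>. \<tau> \<in> U \<Longrightarrow> \<bar>h \<tau>\<bar> \<le> r" and e: "e \<in> Basis" for h e
  proof (rule continuous_on_compose2[OF pc[OF e]])
    have "continuous_on (U \<times> ball (0::'a) 1) (\<lambda>p. h (fst p))"
      by (rule continuous_on_compose2[OF hc continuous_on_fst]) auto
    then show "continuous_on (U \<times> ball (0::'a) 1) (\<lambda>p. h (fst p) *\<^sub>R snd p)"
      by (intro continuous_on_scaleR continuous_on_snd continuous_on_id)
    show "(\<lambda>p. h (fst p) *\<^sub>R snd p) ` (U \<times> ball (0::'a) 1) \<subseteq> ball 0 r"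
      using nice_ball[OF _ hr r] by (auto simp: image_subset_iff)
  qed
  have cjd: "continuous_on (U \<times> ball 0 1) (\<lambda>p. dd u (h (fst p) *\<^sub>R snd p) (snd p))"
    if hc: "continuous_on U h" and hr: "\<And>\<tau>. \<tau> \<in> U \<Longrightarrow> \<bar>h \<tau>\<bar> \<le> r" for h
    unfolding dd_def by (intro continuous_intros cjp[OF hc hr]) auto
  have cwj: "continuous_on (U \<times> ball (0::'a) 1) (\<lambda>p. w (snd p \<bullet> snd p))"
    by (rule continuous_on_compose2[OF wc]) (auto intro!: continuous_intros)
  have ca': "continuous_on (U \<times> ball (0::'a) 1) (\<lambda>p. a' (fst p))"
    by (rule continuous_on_compose2[OF ac continuous_on_fst]) auto
  have cb': "continuous_on (U \<times> ball (0::'a) 1) (\<lambda>p. b' (fst p))"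
    by (rule continuous_on_compose2[OF bc continuous_on_fst]) auto
  have cK'b: "continuous_on (U \<times> ball 0 1) (\<lambda>p. K' (fst p) (snd p))"
    unfolding K'_def
    by (intro continuous_on_mult continuous_on_add cwj ca' cb' cj[OF acont ar] cj[OF bcont br] cjd[OF acont ar] cjd[OF bcont br])
  have cKj: "continuous_on (U \<times> ball 0 1) (\<lambda>p. K (fst p) (snd p))"
    unfolding K_def by (intro continuous_on_mult cwj cj[OF acont ar] cj[OF bcont br])
  have cK'U: "continuous_on (U \<times> UNIV) (\<lambda>p. K' (fst p) (snd p))"
  proof (rule glue2[OF cK'b _ B])
    fix t and x :: 'a assume "B < x \<bullet> x" then show "K' (fst (t, x)) (snd (t, x)) = 0"
      by (simp add: K'_def ws)
  qed
  have cK'box: "continuous_on (U \<times> cbox (-c) c) (\<lambda>(t, x). K' t x)"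
    using continuous_on_subset[OF cK'U] by (simp add: split_beta) (meson subset_UNIV Sigma_mono order_refl)
  have cK: "continuous_on UNIV (K \<tau>)" if "\<tau> \<in> U" for \<tau>
  proof (rule glue1[OF _ _ B])
    have "continuous_on (ball 0 1) (\<lambda>x. (\<lambda>p. K (fst p) (snd p)) (\<tau>, x))"
      by (rule continuous_on_compose2[OF cKj]) (use that in \<open>auto intro!: continuous_intros\<close>)
    then show "continuous_on (ball 0 1) (K \<tau>)" by simp
  next
    fix x :: 'a assume "B < x \<bullet> x" then show "K \<tau> x = 0" by (simp add: K_def ws)
  qed
  have cK'0: "continuous_on UNIV (K' \<tau>0)"
  proof -
    have "continuous_on UNIV (\<lambda>x. (\<lambda>p. K' (fst p) (snd p)) (\<tau>0, x))"
      by (rule continuous_on_compose2[OF cK'U]) (auto intro!: continuous_intros U)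
    then show ?thesis by simp
  qed
  have dK: "((\<lambda>\<tau>. K \<tau> x) has_real_derivative K' \<tau> x) (at \<tau> within U)" if t: "\<tau> \<in> U" for \<tau> x
  proof (cases "x \<in> ball 0 1")
    case True
    have du: "((\<lambda>\<tau>. u (h \<tau> *\<^sub>R x)) has_real_derivative h' \<tau> * dd u (h \<tau> *\<^sub>R x) x) (at \<tau> within U)"
      if hd: "(h has_real_derivative h' \<tau>) (at \<tau> within U)" and hr: "\<bar>h \<tau>\<bar> \<le> r" for h h'
    proof -
      have v: "((\<lambda>\<tau>. h \<tau> *\<^sub>R x) has_vector_derivative h' \<tau> *\<^sub>R x) (at \<tau> within U)"
        using has_vector_derivative_scaleR[OF hd has_vector_derivative_const[of x]] by simp
      have "u differentiable (at (h \<tau> *\<^sub>R x))" using udiff nice_ball[OF True hr r] by blast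
      from chain_dir[OF this v] show ?thesis by (simp add: frechet_dd[OF \<open>u differentiable _\<close>])
    qed
    note d1 = du[of a a', OF ad[OF t] ar[OF t]]
    note d2 = du[of b b', OF bd[OF t] br[OF t]]
    from DERIV_mult[OF DERIV_cmult[OF d1, of "w (x \<bullet> x)"] d2]
    show ?thesis unfolding K_def K'_def by (rule DERIV_cong) (simp add: algebra_simps)
  next
    case False
    then have "(\<lambda>\<tau>. K \<tau> x) = (\<lambda>_. 0)" "K' \<tau> x = 0" using wz by (auto simp: K_def K'_def)
    then show ?thesis by simp
  qed
  have int: "K \<tau> integrable_on cbox (-c) c" if "\<tau> \<in> U" for \<tau>
    using cK[OF that] by (auto intro: integrable_continuous continuous_on_subset)
  have sK: "K \<tau> x = 0" if "x \<notin> cball 0 1" for \<tau> x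
    using that wz by (auto simp: K_def)
  have sK': "K' \<tau> x = 0" if "x \<notin> cball 0 1" for \<tau> x
    using that wz by (auto simp: K'_def)
  have L: "((\<lambda>\<tau>. integral (cbox (-c) c) (K \<tau>)) has_real_derivative integral (cbox (-c) c) (K' \<tau>0)) (at \<tau>0 within U)"
    by (rule leibniz_rule_field_derivative[OF dK int cK'box U(2) U(1)])
  have "integral (cbox (-c) c) (K' \<tau>0) = integral UNIV (K' \<tau>0)"
    by (rule cbox_UNIV_int(1)[OF cK'0 sK' box])
  moreover have "integral (cbox (-c) c) (K \<tau>) = integral UNIV (K \<tau>)" if "\<tau> \<in> U" for \<tau>
    by (rule cbox_UNIV_int(1)[OF cK[OF that] sK box])
  ultimately have "((\<lambda>\<tau>. integral UNIV (K \<tau>)) has_real_derivative integral UNIV (K' \<tau>0)) (at \<tau>0 within U)"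
    using has_field_derivative_transform_within[OF L zero_less_one U(2)] by auto
  then show ?thesis unfolding K_def K'_def .
qed

definition phi :: "real \<Rightarrow> real \<Rightarrow> real \<Rightarrow> real" where
  "phi A B s = max 0 (min 1 ((B - s) / (B - A)))"

definition theta :: "real \<Rightarrow> real \<Rightarrow> real \<Rightarrow> real" where
  "theta A B s = (1/2) * (integral {-1..s} (phi A B) - integral {-1..B} (phi A B))"

lemma phi_cont: "continuous_on UNIV (phi A B)"
  unfolding phi_def divide_inverse by (intro continuous_intros)

lemma phi_zero: "A < B \<Longrightarrow> B \<le> s \<Longrightarrow> phi A B s = 0"
  unfolding phi_def by (auto simp: divide_nonpos_pos)

lemma phi_one: "A < B \<Longrightarrow> s \<le> A \<Longrightarrow> phi A B s = 1"
  unfolding phi_def by (auto simp: field_simps)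

lemma phi_bounds: "0 \<le> phi A B s" "phi A B s \<le> 1"
  unfolding phi_def by auto

lemma theta_deriv:
  assumes "-1 < s"
  shows "(theta A B has_real_derivative phi A B s / 2) (at s)"
proof -
  have "((\<lambda>x. integral {-1..x} (phi A B)) has_real_derivative phi A B s) (at s within {-1..s+1})"
    by (rule integral_has_real_derivative) (use assms in \<open>auto intro: continuous_on_subset[OF phi_cont]\<close>)
  then have d: "((\<lambda>x. integral {-1..x} (phi A B)) has_real_derivative phi A B s) (at s)"
    using at_within_Icc_at[of "-1" s "s+1"] assms by simp
  have "theta A B = (\<lambda>x. (1/2) * (integral {-1..x} (phi A B) - integral {-1..B} (phi A B)))"
    by (simp add: theta_def fun_eq_iff)
  moreover have "((\<lambda>x. (1/2) * (integral {-1..x} (phi A B) - integral {-1..B} (phi A B))) has_real_derivative (1/2) * (phi A B s - 0)) (at s)"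
    by (intro DERIV_cmult DERIV_diff d DERIV_const)
  ultimately show ?thesis by simp
qed

lemma theta_zero:
  assumes "A < B" "-1 \<le> B" "B \<le> s"
  shows "theta A B s = 0"
proof -
  have i: "phi A B integrable_on {-1..s}" by (rule integrable_continuous_real) (rule continuous_on_subset[OF phi_cont], auto)
  have "integral {-1..B} (phi A B) + integral {B..s} (phi A B) = integral {-1..s} (phi A B)"
    using Henstock_Kurzweil_Integration.integral_combine[OF _ _ i, of B] assms by linarith
  moreover have "integral {B..s} (phi A B) = 0"
  proof -
    have "integral {B..s} (phi A B) = integral {B..s} (\<lambda>_. 0::real)"
      by (rule integral_cong) (use assms phi_zero in auto)
    then show ?thesis by simp
  qed
  ultimately show ?thesis by (simp add: theta_def)
qed

lemma theta_cont: "continuous_on {-1<..} (theta A B)"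
  using theta_deriv by (meson DERIV_isCont continuous_at_imp_continuous_on greaterThan_iff)

lemma dline:
  fixes f :: "'a::euclidean_space \<Rightarrow> real"
  assumes "f differentiable (at (k *\<^sub>R x))"
  shows "((\<lambda>t. f (k *\<^sub>R (x + t *\<^sub>R e))) has_real_derivative k * frechet_derivative f (at (k *\<^sub>R x)) e) (at 0)"
proof -
  have v: "((\<lambda>t. k *\<^sub>R (x + t *\<^sub>R e)) has_vector_derivative k *\<^sub>R e) (at 0)"
    by (auto intro!: derivative_eq_intros)
  have "f differentiable (at ((\<lambda>t. k *\<^sub>R (x + t *\<^sub>R e)) 0))" using assms by simp
  from chain_dir[OF this v] have "((\<lambda>t. f (k *\<^sub>R (x + t *\<^sub>R e))) has_real_derivative frechet_derivative f (at (k *\<^sub>R x)) (k *\<^sub>R e)) (at 0)"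
    by simp
  moreover have "frechet_derivative f (at (k *\<^sub>R x)) (k *\<^sub>R e) = k * frechet_derivative f (at (k *\<^sub>R x)) e"
    using linear_frechet_derivative[OF assms] by (simp add: linear_cmul)
  ultimately show ?thesis by simp
qed

lemma dtheta_line:
  fixes x e :: "'a::euclidean_space"
  shows "((\<lambda>t. theta A B ((x + t *\<^sub>R e) \<bullet> (x + t *\<^sub>R e))) has_real_derivative phi A B (x \<bullet> x) * (x \<bullet> e)) (at 0)"
proof -
  have g: "((\<lambda>t. (x + t *\<^sub>R e) \<bullet> (x + t *\<^sub>R e)) has_real_derivative 2 * (x \<bullet> e)) (at 0)"
  proof -
    have "(\<lambda>t. (x + t *\<^sub>R e) \<bullet> (x + t *\<^sub>R e)) = (\<lambda>t. x \<bullet> x + t * (2 * (x \<bullet> e)) + t^2 * (e \<bullet> e))"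
      by (auto simp: fun_eq_iff inner_add_left inner_add_right power2_eq_square algebra_simps inner_commute)
    moreover have "((\<lambda>t. x \<bullet> x + t * (2 * (x \<bullet> e)) + t^2 * (e \<bullet> e)) has_real_derivative 2 * (x \<bullet> e)) (at 0)"
      by (auto intro!: derivative_eq_intros)
    ultimately show ?thesis by simp
  qed
  have "-1 < x \<bullet> x" using inner_ge_zero[of x] by linarith
  then have t: "(theta A B has_real_derivative phi A B (x \<bullet> x) / 2) (at ((x + 0 *\<^sub>R e) \<bullet> (x + 0 *\<^sub>R e)))"
    using theta_deriv[of "x \<bullet> x" A B] by simp
  from DERIV_chain2[OF t g] show ?thesis by simp
qed

lemma sym_zero:
  fixes u :: "'a::euclidean_space \<Rightarrow> real"
  assumes harm: "harmonic_on (ball 0 r) u" and r: "0 < r" and AB: "-1 < A" "A < B" "B < 1"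
    and l: "\<bar>l\<bar> \<le> r" and m: "\<bar>m\<bar> \<le> r"
  shows "integral UNIV (\<lambda>x. phi A B (x \<bullet> x) * (l * dd u (l *\<^sub>R x) x * u (m *\<^sub>R x)
            + u (l *\<^sub>R x) * (- m * dd u (m *\<^sub>R x) x))) = 0"
proof -
  define Th where "Th x = theta A B (x \<bullet> x)" for x :: 'a
  define F where "F e x = u (m *\<^sub>R x) * (l * partial_deriv u e (l *\<^sub>R x)) - u (l *\<^sub>R x) * (m * partial_deriv u e (m *\<^sub>R x))" for e x :: 'a
  define G where "G e x = Th x * F e x" for e x
  define g where "g e x = phi A B (x \<bullet> x) * (x \<bullet> e) * F e x + Th x * (u (m *\<^sub>R x) * (l * l * partial_deriv (partial_deriv u e) e (l *\<^sub>R x))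
       - u (l *\<^sub>R x) * (m * m * partial_deriv (partial_deriv u e) e (m *\<^sub>R x)))" for e x
  have zero_out: "Th x = 0 \<and> phi A B (x \<bullet> x) = 0" if "B < x \<bullet> x" for x
    using that theta_zero[of A B "x \<bullet> x"] phi_zero[of A B "x \<bullet> x"] AB by (auto simp: Th_def)
  have zero_out': "Th x = 0 \<and> phi A B (x \<bullet> x) = 0" if "x \<notin> ball 0 1" for x
    using zero_out out_ball_w[OF that AB(3)] by blast
  have uc: "continuous_on (ball 0 r) u" using harm unfolding harmonic_on_def
    by (simp add: differentiable_imp_continuous_on)
  have pc: "continuous_on (ball 0 r) (partial_deriv u e)" if "e \<in> Basis" for e
    using harm that unfolding harmonic_on_def by (simp add: differentiable_imp_continuous_on)
  have p2c: "continuous_on (ball 0 r) (partial_deriv (partial_deriv u e) e)" if "e \<in> Basis" for e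
    using harm that unfolding harmonic_on_def by simp
  have udiff: "u differentiable (at y)" if "y \<in> ball 0 r" for y
    using harm that unfolding harmonic_on_def by (simp add: differentiable_on_eq_differentiable_at)
  have pdiff: "partial_deriv u e differentiable (at y)" if "y \<in> ball 0 r" "e \<in> Basis" for y e
    using harm that unfolding harmonic_on_def by (simp add: differentiable_on_eq_differentiable_at)
  have lap: "(\<Sum>e\<in>Basis. partial_deriv (partial_deriv u e) e y) = 0" if "y \<in> ball 0 r" for y
    using harm that unfolding harmonic_on_def laplacian_def by simp
  have comp: "continuous_on (ball (0::'a) 1) (\<lambda>x. f (k *\<^sub>R x))" if "continuous_on (ball 0 r) f" "\<bar>k\<bar> \<le> r" for f k
  proof (rule continuous_on_compose2[OF that(1)])
    show "continuous_on (ball (0::'a) 1) (\<lambda>x. k *\<^sub>R x)" by (intro continuous_intros)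
    show "(\<lambda>x. k *\<^sub>R x) ` ball (0::'a) 1 \<subseteq> ball 0 r" using nice_ball[OF _ that(2) r] by auto
  qed
  have Thc: "continuous_on (ball 0 1) Th"
    unfolding Th_def by (rule continuous_on_compose2[OF theta_cont]) (auto intro!: continuous_intros simp: image_subset_iff intro: less_le_trans[OF _ inner_ge_zero])
  have phic: "continuous_on (ball (0::'a) 1) (\<lambda>x. phi A B (x \<bullet> x))"
    by (rule continuous_on_compose2[OF phi_cont]) (auto intro!: continuous_intros)
  have Fc: "continuous_on (ball 0 1) (F e)" if "e \<in> Basis" for e
    unfolding F_def by (intro continuous_intros comp uc pc that l m)
  have Gc: "continuous_on UNIV (G e)" if e: "e \<in> Basis" for e
  proof (rule glue1[OF _ _ AB(3)])
    show "continuous_on (ball 0 1) (G e)" unfolding G_def by (intro continuous_intros Thc Fc e)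
  qed (use zero_out in \<open>auto simp: G_def\<close>)
  have gc: "continuous_on UNIV (g e)" if e: "e \<in> Basis" for e
  proof (rule glue1[OF _ _ AB(3)])
    show "continuous_on (ball 0 1) (g e)" unfolding g_def
      by (intro continuous_intros Thc Fc e phic comp uc p2c l m)
  qed (use zero_out in \<open>auto simp: g_def\<close>)
  have gs: "g e x = 0" "G e x = 0" if "x \<notin> cball 0 1" for e x
    using zero_out'[of x] that by (auto simp: g_def G_def)
  have dG: "((\<lambda>t. G e (x + t *\<^sub>R e)) has_real_derivative g e x) (at 0)" if e: "e \<in> Basis" for e x
  proof (cases "x \<in> ball 0 1")
    case True
    have lx: "l *\<^sub>R x \<in> ball 0 r" and mx: "m *\<^sub>R x \<in> ball 0 r" using nice_ball[OF True] l m r by auto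
    have dT: "((\<lambda>t. Th (x + t *\<^sub>R e)) has_real_derivative phi A B (x \<bullet> x) * (x \<bullet> e)) (at 0)"
      unfolding Th_def by (rule dtheta_line)
    have du: "((\<lambda>t. u (k *\<^sub>R (x + t *\<^sub>R e))) has_real_derivative k * partial_deriv u e (k *\<^sub>R x)) (at 0)"
      if "k *\<^sub>R x \<in> ball 0 r" for k
      using dline[OF udiff[OF that], of e] by (simp add: partial_deriv_def)
    have dp: "((\<lambda>t. partial_deriv u e (k *\<^sub>R (x + t *\<^sub>R e))) has_real_derivative k * partial_deriv (partial_deriv u e) e (k *\<^sub>R x)) (at 0)"
      if "k *\<^sub>R x \<in> ball 0 r" for k
      using dline[OF pdiff[OF that e], of e] by (simp add: partial_deriv_def)
    have D: "((\<lambda>t. Th (x + t *\<^sub>R e) * (u (m *\<^sub>R (x + t *\<^sub>R e)) * (l * partial_deriv u e (l *\<^sub>R (x + t *\<^sub>R e)))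
          - u (l *\<^sub>R (x + t *\<^sub>R e)) * (m * partial_deriv u e (m *\<^sub>R (x + t *\<^sub>R e)))))
        has_real_derivative
          (phi A B (x \<bullet> x) * (x \<bullet> e)) * (u (m *\<^sub>R (x + 0 *\<^sub>R e)) * (l * partial_deriv u e (l *\<^sub>R (x + 0 *\<^sub>R e)))
          - u (l *\<^sub>R (x + 0 *\<^sub>R e)) * (m * partial_deriv u e (m *\<^sub>R (x + 0 *\<^sub>R e))))
          + ((m * partial_deriv u e (m *\<^sub>R x)) * (l * partial_deriv u e (l *\<^sub>R (x + 0 *\<^sub>R e)))
               + (l * (l * partial_deriv (partial_deriv u e) e (l *\<^sub>R x))) * u (m *\<^sub>R (x + 0 *\<^sub>R e))
             - ((l * partial_deriv u e (l *\<^sub>R x)) * (m * partial_deriv u e (m *\<^sub>R (x + 0 *\<^sub>R e)))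
               + (m * (m * partial_deriv (partial_deriv u e) e (m *\<^sub>R x))) * u (l *\<^sub>R (x + 0 *\<^sub>R e))))
            * Th (x + 0 *\<^sub>R e)) (at 0)"
      by (intro DERIV_mult DERIV_diff DERIV_cmult dT du dp lx mx)
    have "(\<lambda>t. G e (x + t *\<^sub>R e)) = (\<lambda>t. Th (x + t *\<^sub>R e) * (u (m *\<^sub>R (x + t *\<^sub>R e)) * (l * partial_deriv u e (l *\<^sub>R (x + t *\<^sub>R e)))
          - u (l *\<^sub>R (x + t *\<^sub>R e)) * (m * partial_deriv u e (m *\<^sub>R (x + t *\<^sub>R e)))))"
      by (simp add: G_def F_def fun_eq_iff)
    then show ?thesis using D by (simp add: g_def F_def algebra_simps)
  next
    case False
    then have xx: "1 \<le> x \<bullet> x" using out_ball_w[OF False, of 1] 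
      by (metis mem_ball_0 not_less one_le_power power2_norm_eq_inner)
    define S where "S = {t::real. B < (x + t *\<^sub>R e) \<bullet> (x + t *\<^sub>R e)}"
    have oS: "open S" unfolding S_def by (rule open_Collect_less) (auto intro!: continuous_intros)
    have "0 \<in> S" using xx AB by (simp add: S_def)
    have "g e x = 0" using zero_out[of x] xx AB by (simp add: g_def)
    moreover have "((\<lambda>t. G e (x + t *\<^sub>R e)) has_real_derivative 0) (at 0)"
      by (rule has_field_derivative_transform_within_open[OF DERIV_const oS \<open>0 \<in> S\<close>])
         (use zero_out in \<open>auto simp: S_def G_def\<close>)
    ultimately show ?thesis by simp
  qed
  have gi: "integral UNIV (g e) = 0" if e: "e \<in> Basis" for e
    by (rule ibp_dir[OF dG[OF e] gc[OF e] Gc[OF e], of 1]) (auto simp: gs)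
  have ginti: "g e integrable_on UNIV" if e: "e \<in> Basis" for e
  proof -
    obtain c where box: "cball (0::'a) 1 \<subseteq> cbox (-c) c"
      using bounded_subset_cbox_symmetric[OF bounded_cball] by blast
    show ?thesis using cbox_UNIV_int(2)[OF gc[OF e] _ box] gs by blast
  qed
  have "integral UNIV (\<lambda>x. \<Sum>e\<in>Basis. g e x) = (\<Sum>e\<in>Basis. integral UNIV (g e))"
    by (rule integral_sum) (auto intro: ginti)
  also have "\<dots> = 0" using gi by simp
  finally have I: "integral UNIV (\<lambda>x. \<Sum>e\<in>Basis. g e x) = 0" .
  have "(\<Sum>e\<in>Basis. g e x) = phi A B (x \<bullet> x) * (l * dd u (l *\<^sub>R x) x * u (m *\<^sub>R x)
            + u (l *\<^sub>R x) * (- m * dd u (m *\<^sub>R x) x))" for x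
  proof (cases "x \<in> ball 0 1")
    case True
    have lx: "l *\<^sub>R x \<in> ball 0 r" and mx: "m *\<^sub>R x \<in> ball 0 r" using nice_ball[OF True] l m r by auto
    have "(\<Sum>e\<in>Basis. g e x) = (\<Sum>e\<in>Basis. phi A B (x \<bullet> x) * (x \<bullet> e) * F e x)
       + Th x * (u (m *\<^sub>R x) * (l * l * (\<Sum>e\<in>Basis. partial_deriv (partial_deriv u e) e (l *\<^sub>R x)))
       - u (l *\<^sub>R x) * (m * m * (\<Sum>e\<in>Basis. partial_deriv (partial_deriv u e) e (m *\<^sub>R x))))"
      unfolding g_def by (simp add: sum.distrib sum_distrib_left sum_subtractf algebra_simps)
    also have "\<dots> = (\<Sum>e\<in>Basis. phi A B (x \<bullet> x) * (x \<bullet> e) * F e x)"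
      using lap[OF lx] lap[OF mx] by simp
    also have "\<dots> = phi A B (x \<bullet> x) * (l * dd u (l *\<^sub>R x) x * u (m *\<^sub>R x)
            + u (l *\<^sub>R x) * (- m * dd u (m *\<^sub>R x) x))"
      unfolding F_def dd_def by (simp add: sum_distrib_left sum_subtractf sum_negf algebra_simps)
    finally show ?thesis .
  next
    case False
    then show ?thesis using zero_out'[of x] by (simp add: g_def)
  qed
  then show ?thesis using I by simp
qed

lemma dyadic_ineq:
  fixes G :: "real \<Rightarrow> real"
  assumes nn: "\<And>q. 0 \<le> q \<Longrightarrow> q \<le> 1 \<Longrightarrow> 0 \<le> G q"
    and mid: "\<And>q1 q2. 0 \<le> q1 \<Longrightarrow> q1 \<le> 1 \<Longrightarrow> 0 \<le> q2 \<Longrightarrow> q2 \<le> 1 \<Longrightarrow>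
       G ((q1 + q2) / 2) ^ 2 \<le> G q1 * G q2"
  shows "j \<le> 2^k \<Longrightarrow> G (real j / 2^k) ^ (2^k) \<le> G 0 ^ (2^k - j) * G 1 ^ j"
proof (induction k arbitrary: j)
  case 0
  then have "j = 0 \<or> j = 1" by auto
  then show ?case by auto
next
  case (Suc k)
  define N :: nat where "N = 2^k"
  have N2: "(2::nat)^(Suc k) = 2 * N" by (simp add: N_def)
  have Npos: "0 < N" by (simp add: N_def)
  have IH: "G (real i / N) ^ N \<le> G 0 ^ (N - i) * G 1 ^ i" if "i \<le> N" for i
    using Suc.IH[of i] that by (simp add: N_def)
  have G0: "0 \<le> G 0" and G1: "0 \<le> G 1" using nn by auto
  have nnq: "0 \<le> G (real i / N)" if "i \<le> N" for i
    using nn that Npos by (simp add: divide_le_eq_1)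
  have j: "j \<le> 2 * N" using Suc.prems N2 by simp
  show ?case
  proof (cases "even j")
    case True
    then obtain i where i: "j = 2 * i" by blast
    with j have iN: "i \<le> N" by simp
    have q: "real j / 2 ^ Suc k = real i / N" using i by (simp add: N_def)
    have "G (real i / N) ^ (2 * N) = (G (real i / N) ^ N)^2" by (simp add: power_mult mult.commute)
    also have "\<dots> \<le> (G 0 ^ (N - i) * G 1 ^ i)^2"
      by (rule power_mono[OF IH[OF iN]]) (simp add: nnq[OF iN])
    also have "\<dots> = G 0 ^ ((N - i) * 2) * G 1 ^ (i * 2)"
      by (simp add: power_mult_distrib power_mult)
    finally have f: "G (real i / N) ^ (2 * N) \<le> G 0 ^ ((N - i) * 2) * G 1 ^ (i * 2)" .
    have e: "2 ^ Suc k - j = (N - i) * 2" "j = i * 2" using i iN N2 by auto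
    have x1: "G (real j / 2 ^ Suc k) ^ 2 ^ Suc k = G (real i / N) ^ (2*N)" by (simp only: q N2)
    have x2: "G 0 ^ (2 ^ Suc k - j) * G 1 ^ j = G 0 ^ ((N - i) * 2) * G 1 ^ (i * 2)" by (simp only: e(1)) (simp only: e(2))
    show ?thesis using f x1 x2 by linarith
  next
    case False
    then obtain i where i: "j = 2 * i + 1" using oddE by blast
    with j have iN: "i < N" by simp
    have q: "real j / 2 ^ Suc k = (real i / N + real (i+1) / N) / 2" using i by (simp add: N_def field_simps)
    have a1: "0 \<le> real i / N" "real i / N \<le> 1" using iN Npos by (auto simp: divide_le_eq_1)
    have a2: "0 \<le> real (i+1) / N" "real (i+1) / N \<le> 1" using iN Npos by (auto simp: divide_le_eq_1)
    have m: "G ((real i / N + real (i+1) / N) / 2) ^ 2 \<le> G (real i / N) * G (real (i+1) / N)"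
      by (rule mid) (use a1 a2 in auto)
    have "G ((real i / N + real (i+1) / N) / 2) ^ (2 * N) = (G ((real i / N + real (i+1) / N) / 2) ^ 2) ^ N"
      by (simp add: power_mult)
    also have "\<dots> \<le> (G (real i / N) * G (real (i+1) / N)) ^ N"
      by (rule power_mono[OF m]) simp
    also have "\<dots> = G (real i / N) ^ N * G (real (i+1) / N) ^ N" by (simp add: power_mult_distrib)
    also have "\<dots> \<le> (G 0 ^ (N - i) * G 1 ^ i) * (G 0 ^ (N - (i+1)) * G 1 ^ (i+1))"
    proof (rule mult_mono[OF IH IH])
      show "0 \<le> G (real (i+1) / N) ^ N" using nnq[of "i+1"] iN by simp
      show "0 \<le> G 0 ^ (N - i) * G 1 ^ i" using G0 G1 by simp
    qed (use iN in auto)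
    also have "\<dots> = G 0 ^ ((N - i) + (N - (i+1))) * G 1 ^ (i + (i+1))"
      by (simp add: power_add algebra_simps)
    finally have f: "G ((real i / N + real (i+1) / N) / 2) ^ (2 * N) \<le> G 0 ^ ((N - i) + (N - (i+1))) * G 1 ^ (i + (i+1))" .
    have x1: "G (real j / 2 ^ Suc k) ^ 2 ^ Suc k = G ((real i / N + real (i+1) / N) / 2) ^ (2*N)" by (simp only: q N2)
    have e: "2 ^ Suc k - j = (N - i) + (N - (i+1))" "j = i + (i+1)" using i iN N2 by auto
    have x2: "G 0 ^ (2 ^ Suc k - j) * G 1 ^ j = G 0 ^ ((N - i) + (N - (i+1))) * G 1 ^ (i + (i+1))"
      by (simp only: e(1)) (simp only: e(2))
    show ?thesis using f x1 x2 by linarith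
  qed
qed

lemma dyadic_limit:
  fixes G :: "real \<Rightarrow> real"
  assumes cont: "continuous_on {0..1} G" and nn: "\<And>q. 0 \<le> q \<Longrightarrow> q \<le> 1 \<Longrightarrow> 0 \<le> G q"
    and dy: "\<And>k j. j \<le> 2^k \<Longrightarrow> G (real j / 2^k) ^ (2^k) \<le> G 0 ^ (2^k - j) * G 1 ^ j"
    and th: "0 < \<theta>" "\<theta> < 1"
  shows "G \<theta> \<le> G 0 powr (1 - \<theta>) * G 1 powr \<theta>"
proof -
  define J where "J k = nat \<lfloor>\<theta> * 2^k\<rfloor>" for k :: nat
  define q where "q k = real (J k) / 2^k" for k
  have Jr: "real (J k) = of_int \<lfloor>\<theta> * 2^k\<rfloor>" for k
    using th by (simp add: J_def)
  have J1: "real (J k) \<le> \<theta> * 2^k" "\<theta> * 2^k < real (J k) + 1" for k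
    unfolding Jr by linarith+
  have qle: "q k \<le> \<theta>" for k using J1(1)[of k] by (simp add: q_def field_simps)
  have qge: "\<theta> - (1/2)^k \<le> q k" for k
  proof -
    have "\<theta> * 2^k - 1 \<le> real (J k)" using J1(2)[of k] by linarith
    then have "(\<theta> * 2^k - 1) / 2^k \<le> real (J k) / 2^k" by (simp add: divide_right_mono)
    then show ?thesis by (simp add: q_def power_divide diff_divide_distrib)
  qed
  have q0: "0 \<le> q k" for k by (simp add: q_def)
  have q1: "q k \<le> 1" for k using qle[of k] th by simp
  have Jle: "J k \<le> 2^k" for k
  proof -
    have "real (J k) \<le> 2^k" using J1(1)[of k] th by (smt (verit) mult_left_le_one_le zero_le_power)
    then show ?thesis by (metis of_nat_le_iff of_nat_numeral of_nat_power)
  qed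
  have qlim: "q \<longlonglongrightarrow> \<theta>"
  proof (rule tendsto_sandwich[of "\<lambda>k. \<theta> - (1/2)^k" _ _ "\<lambda>_. \<theta>"])
    show "(\<lambda>k. \<theta> - (1/2)^k) \<longlonglongrightarrow> \<theta>"
      using tendsto_diff[OF tendsto_const LIMSEQ_realpow_zero[of "1/2::real"]] by simp
  qed (use qle qge in auto)
  have Glim: "(\<lambda>k. G (q k)) \<longlonglongrightarrow> G \<theta>"
    by (rule continuous_on_tendsto_compose[OF cont qlim]) (use th q0 q1 in auto)
  obtain k0 where k0: "1/\<theta> < 2^k0" using real_arch_pow[of 2 "1/\<theta>"] by auto
  have Jpos: "1 \<le> J k" and Jlt: "J k < 2^k" if "k0 \<le> k" for k
  proof -
    have "(2::real)^k0 \<le> 2^k" using that by (simp add: power_increasing)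
    then have "1/\<theta> < 2^k" using k0 by linarith
    then have "1 < \<theta> * 2^k" using th by (simp add: divide_less_eq mult.commute)
    then have "1 \<le> \<lfloor>\<theta> * 2^k\<rfloor>" by linarith
    then show "1 \<le> J k" unfolding J_def by (metis nat_mono nat_one_as_int)
    have "\<theta> * 2^k < 2^k" using th by simp
    then have "real (J k) < 2^k" using J1(1)[of k] by linarith
    then show "J k < 2^k" by (metis of_nat_less_iff of_nat_numeral of_nat_power)
  qed
  show ?thesis
  proof (cases "0 < G 0 \<and> 0 < G 1")
    case True
    have bnd: "G (q k) \<le> G 0 powr (1 - q k) * G 1 powr (q k)" for k
    proof (cases "G (q k) = 0")
      case True
      then show ?thesis by simp
    next
      case False
      then have X: "0 < G (q k)" using nn[OF q0[of k] q1[of k]] by linarith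
      define N :: nat where "N = 2^k"
      have Npos: "0 < real N" by (simp add: N_def)
      have "G (q k) ^ N \<le> G 0 ^ (N - J k) * G 1 ^ J k"
        using dy[OF Jle[of k]] by (simp add: q_def N_def)
      then have "ln (G (q k) ^ N) \<le> ln (G 0 ^ (N - J k) * G 1 ^ J k)"
        using X True by (subst ln_le_cancel_iff) auto
      then have "real N * ln (G (q k)) \<le> real (N - J k) * ln (G 0) + real (J k) * ln (G 1)"
        using True by (simp add: ln_mult ln_realpow)
      moreover have "real (N - J k) * ln (G 0) = (real N - real (J k)) * ln (G 0)" using Jle[of k] by (simp add: N_def of_nat_diff)
      moreover have "real N * ((1 - q k) * ln (G 0) + q k * ln (G 1)) = (real N - real (J k)) * ln (G 0) + real (J k) * ln (G 1)"
        using Npos by (simp add: q_def N_def field_simps)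
      ultimately have "real N * ln (G (q k)) \<le> real N * ((1 - q k) * ln (G 0) + q k * ln (G 1))"
        by linarith
      then have "ln (G (q k)) \<le> (1 - q k) * ln (G 0) + q k * ln (G 1)"
        using Npos by simp
      then have "exp (ln (G (q k))) \<le> exp ((1 - q k) * ln (G 0) + q k * ln (G 1))" by simp
      then show ?thesis using X True by (simp add: powr_def exp_add)
    qed
    have Rlim: "(\<lambda>k. G 0 powr (1 - q k) * G 1 powr (q k)) \<longlonglongrightarrow> G 0 powr (1 - \<theta>) * G 1 powr \<theta>"
      using True by (intro tendsto_intros qlim) auto
    show ?thesis by (rule LIMSEQ_le[OF Glim Rlim]) (use bnd in auto)
  next
    case False
    then have z: "G 0 = 0 \<or> G 1 = 0" using nn[of 0] nn[of 1] by auto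
    have "G (q k) = 0" if "k0 \<le> k" for k
    proof -
      have "G (q k) ^ 2^k \<le> G 0 ^ (2^k - J k) * G 1 ^ J k" using dy[OF Jle[of k]] by (simp add: q_def)
      also have "\<dots> = 0" using z Jpos[OF that] Jlt[OF that] by auto
      finally have "G (q k) ^ 2^k \<le> 0" .
      moreover have "0 \<le> G (q k)" using nn[OF q0[of k] q1[of k]] .
      ultimately show ?thesis by (smt (verit) zero_le_power power_eq_0_iff zero_less_power)
    qed
    then have "(\<lambda>k. G (q k)) \<longlonglongrightarrow> 0"
      by (intro tendsto_eventually) (auto simp: eventually_sequentially)
    then have "G \<theta> = 0" using Glim LIMSEQ_unique by blast
    then show ?thesis by simp
  qed
qed

context
  fixes u :: "'a::euclidean_space \<Rightarrow> real" and r A B :: real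
  assumes harm: "harmonic_on (ball 0 r) u" and r: "0 < r" and AB: "-1 < A" "A < B" "B < 1"
begin

definition Pw :: "real \<Rightarrow> real \<Rightarrow> real" where
  "Pw l m = integral UNIV (\<lambda>x. phi A B (x \<bullet> x) * u (l *\<^sub>R x) * u (m *\<^sub>R x))"

lemma uc: "continuous_on (ball 0 r) u" using harm unfolding harmonic_on_def
  by (simp add: differentiable_imp_continuous_on)

lemma comp1: "continuous_on (ball (0::'a) 1) (\<lambda>x. u (k *\<^sub>R x))" if "\<bar>k\<bar> \<le> r" for k
proof (rule continuous_on_compose2[OF uc])
  show "continuous_on (ball (0::'a) 1) (\<lambda>x. k *\<^sub>R x)" by (intro continuous_intros)
  show "(\<lambda>x. k *\<^sub>R x) ` ball (0::'a) 1 \<subseteq> ball 0 r" using nice_ball[OF _ that r] by auto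
qed

lemma phic1: "continuous_on (ball (0::'a) 1) (\<lambda>x. phi A B (x \<bullet> x))"
  by (rule continuous_on_compose2[OF phi_cont]) (auto intro!: continuous_intros)

lemma pair_cont:
  assumes "\<bar>l\<bar> \<le> r" "\<bar>m\<bar> \<le> r"
  shows "continuous_on UNIV (\<lambda>x. phi A B (x \<bullet> x) * u (l *\<^sub>R x) * u (m *\<^sub>R x))"
proof (rule glue1[OF _ _ AB(3)])
  show "continuous_on (ball 0 1) (\<lambda>x. phi A B (x \<bullet> x) * u (l *\<^sub>R x) * u (m *\<^sub>R x))"
    by (intro continuous_on_mult phic1 comp1 assms)
qed (use phi_zero AB in auto)

lemma pair_supp: "x \<notin> cball 0 1 \<Longrightarrow> phi A B (x \<bullet> x) * u (l *\<^sub>R x) * u (m *\<^sub>R x) = 0"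
  using phi_zero[of A B "x \<bullet> x"] out_ball_w[of x B] AB by auto

lemma pair_int:
  assumes "\<bar>l\<bar> \<le> r" "\<bar>m\<bar> \<le> r"
  shows "((\<lambda>x. phi A B (x \<bullet> x) * u (l *\<^sub>R x) * u (m *\<^sub>R x)) has_integral Pw l m) UNIV"
proof -
  obtain c where box: "cball (0::'a) 1 \<subseteq> cbox (-c) c"
    using bounded_subset_cbox_symmetric[OF bounded_cball] by blast
  show ?thesis unfolding Pw_def by (rule cbox_UNIV_int(2)[OF pair_cont[OF assms] pair_supp box])
qed

lemma pair_eq:
  assumes l: "0 < l" "l \<le> r" and m: "0 < m" "m \<le> r"
  shows "Pw l m = Pw (sqrt (l * m)) (sqrt (l * m))"
proof -
  define c where "c = sqrt (l * m)"
  have c: "0 < c" using l m by (simp add: c_def)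
  have cc: "c * c = l * m" using l m by (simp add: c_def)
  define t0 where "t0 = ln (l / c)"
  have el: "c * exp t0 = l" using c l by (simp add: t0_def)
  have em: "c * exp (- t0) = m"
  proof -
    have "exp (- t0) = c / l" using c l by (simp add: t0_def exp_minus)
    then have "c * exp (- t0) = c * (c / l)" by simp
    also have "\<dots> = m" using cc l by (simp add: field_simps)
    finally show ?thesis .
  qed
  define U where "U = {-\<bar>t0\<bar>..\<bar>t0\<bar>}"
  have bnd: "\<bar>c * exp t\<bar> \<le> r" if "t \<in> U" for t
  proof -
    have "c * exp t \<le> c * exp \<bar>t0\<bar>" using that c by (simp add: U_def)
    also have "c * exp \<bar>t0\<bar> \<le> r"
    proof (cases "0 \<le> t0")
      case True then show ?thesis using el l by simp
    next
      case False then show ?thesis using em m by simp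
    qed
    finally show ?thesis using c by simp
  qed
  have bnd2: "\<bar>c * exp (- t)\<bar> \<le> r" if "t \<in> U" for t
    using bnd[of "-t"] that by (simp add: U_def)
  have D: "((\<lambda>t. Pw (c * exp t) (c * exp (- t))) has_real_derivative 0) (at t within U)" if t: "t \<in> U" for t
  proof -
    have "((\<lambda>t. integral UNIV (\<lambda>x. phi A B (x \<bullet> x) * u ((c * exp t) *\<^sub>R x) * u ((c * exp (- t)) *\<^sub>R x))) has_real_derivative
      integral UNIV (\<lambda>x. phi A B (x \<bullet> x) * (c * exp t * dd u ((c * exp t) *\<^sub>R x) x * u ((c * exp (- t)) *\<^sub>R x)
        + u ((c * exp t) *\<^sub>R x) * (- (c * exp (- t)) * dd u ((c * exp (- t)) *\<^sub>R x) x)))) (at t within U)"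
    proof (rule deriv_pair[OF harm r phi_cont _ AB(3), where a="\<lambda>t. c * exp t" and b="\<lambda>t. c * exp (- t)"])
      show "convex U" by (simp add: U_def)
      show "t \<in> U" by (rule t)
      show "((\<lambda>t. c * exp t) has_real_derivative c * exp s) (at s within U)" for s
        by (auto intro!: derivative_eq_intros)
      show "((\<lambda>t. c * exp (- t)) has_real_derivative - (c * exp (- s))) (at s within U)" for s
        by (auto intro!: derivative_eq_intros)
      show "continuous_on U (\<lambda>s. c * exp s)" by (intro continuous_intros)
      show "continuous_on U (\<lambda>s. - (c * exp (- s)))" by (intro continuous_intros)
    qed (use phi_zero AB bnd bnd2 in auto)
    moreover have "integral UNIV (\<lambda>x. phi A B (x \<bullet> x) * (c * exp t * dd u ((c * exp t) *\<^sub>R x) x * u ((c * exp (- t)) *\<^sub>R x)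
        + u ((c * exp t) *\<^sub>R x) * (- (c * exp (- t)) * dd u ((c * exp (- t)) *\<^sub>R x) x))) = 0"
      by (rule sym_zero[OF harm r AB bnd[OF t] bnd2[OF t]])
    ultimately show ?thesis unfolding Pw_def by simp
  qed
  obtain k where k: "\<forall>t\<in>U. Pw (c * exp t) (c * exp (- t)) = k"
    using has_field_derivative_zero_constant[of U, OF _ D] by (auto simp: U_def)
  have "t0 \<in> U" "0 \<in> U" by (auto simp: U_def)
  then have "Pw (c * exp t0) (c * exp (- t0)) = Pw (c * exp 0) (c * exp (- 0))" using k by metis
  then show ?thesis using el em by (simp add: c_def)
qed


lemma quad_le:
  fixes a p c :: real
  assumes h: "\<And>t. 0 \<le> a + 2*t*p + t^2*c" and c: "0 \<le> c"
  shows "p^2 \<le> a*c"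
proof (cases "c = 0")
  case True
  have "p = 0"
  proof (rule ccontr)
    assume "p \<noteq> 0"
    have "0 \<le> a + 2*(-(\<bar>a\<bar>+1)/(2*p))*p + (-(\<bar>a\<bar>+1)/(2*p))^2*c" by (rule h)
    also have "\<dots> = a - (\<bar>a\<bar>+1)" using \<open>p \<noteq> 0\<close> True by (simp add: field_simps)
    finally show False by linarith
  qed
  then show ?thesis using True by simp
next
  case False
  then have c': "0 < c" using c by simp
  have "0 \<le> a + 2*(-p/c)*p + (-p/c)^2*c" by (rule h)
  also have "\<dots> = a - p^2/c" using c' by (simp add: field_simps power2_eq_square)
  finally have "p^2/c \<le> a" by simp
  then show ?thesis using c' by (simp add: divide_le_eq mult.commute)
qed

lemma Pw_nonneg: "\<bar>l\<bar> \<le> r \<Longrightarrow> 0 \<le> Pw l l"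
proof (rule has_integral_nonneg[OF pair_int])
  fix x :: 'a
  have "0 \<le> u (l *\<^sub>R x) * u (l *\<^sub>R x)" by simp
  then show "0 \<le> phi A B (x \<bullet> x) * u (l *\<^sub>R x) * u (l *\<^sub>R x)"
    using phi_bounds(1)[of A B "x \<bullet> x"] by (simp add: mult.assoc)
qed

lemma pair_CS:
  assumes "\<bar>l\<bar> \<le> r" "\<bar>m\<bar> \<le> r"
  shows "(Pw l m)^2 \<le> Pw l l * Pw m m"
proof (rule quad_le[OF _ Pw_nonneg[OF assms(2)]])
  fix t :: real
  have "((\<lambda>x. phi A B (x \<bullet> x) * u (l *\<^sub>R x) * u (l *\<^sub>R x) + (2*t) * (phi A B (x \<bullet> x) * u (l *\<^sub>R x) * u (m *\<^sub>R x))
      + t^2 * (phi A B (x \<bullet> x) * u (m *\<^sub>R x) * u (m *\<^sub>R x))) has_integral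
      Pw l l + (2*t) * Pw l m + t^2 * Pw m m) UNIV"
    by (intro has_integral_add has_integral_mult_right pair_int assms)
  moreover have "phi A B (x \<bullet> x) * u (l *\<^sub>R x) * u (l *\<^sub>R x) + (2*t) * (phi A B (x \<bullet> x) * u (l *\<^sub>R x) * u (m *\<^sub>R x))
      + t^2 * (phi A B (x \<bullet> x) * u (m *\<^sub>R x) * u (m *\<^sub>R x)) = phi A B (x \<bullet> x) * (u (l *\<^sub>R x) + t * u (m *\<^sub>R x))^2" for x
    by (simp add: power2_eq_square algebra_simps)
  ultimately have "((\<lambda>x. phi A B (x \<bullet> x) * (u (l *\<^sub>R x) + t * u (m *\<^sub>R x))^2) has_integral
      Pw l l + (2*t) * Pw l m + t^2 * Pw m m) UNIV" by simp
  then have "0 \<le> Pw l l + (2*t) * Pw l m + t^2 * Pw m m"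
    by (rule has_integral_nonneg) (auto intro!: mult_nonneg_nonneg phi_bounds)
  then show "0 \<le> Pw l l + 2*t*Pw l m + t^2 * Pw m m" by simp
qed

lemma gg_cont: "continuous_on {0<..r} (\<lambda>s. Pw s s)"
proof -
  have "((\<lambda>s. Pw s s) has_real_derivative
      integral UNIV (\<lambda>x. phi A B (x \<bullet> x) * (1 * dd u (s *\<^sub>R x) x * u (s *\<^sub>R x) + u (s *\<^sub>R x) * (1 * dd u (s *\<^sub>R x) x))))
      (at s within {0<..r})" if "s \<in> {0<..r}" for s
    unfolding Pw_def
    by (rule deriv_pair[OF harm r phi_cont _ AB(3), where a="\<lambda>t. t" and b="\<lambda>t. t" and a'="\<lambda>_. 1" and b'="\<lambda>_. 1"])
       (use that phi_zero AB in \<open>auto intro!: derivative_eq_intros continuous_intros\<close>)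
  then show ?thesis
    by (meson DERIV_continuous continuous_on_eq_continuous_within)
qed

lemma gg_logconv:
  assumes r1: "0 < r1" "r1 \<le> r" and th: "0 < \<theta>" "\<theta> < 1"
  shows "Pw (exp ((1 - \<theta>) * ln r1 + \<theta> * ln r)) (exp ((1 - \<theta>) * ln r1 + \<theta> * ln r))
     \<le> Pw r1 r1 powr (1 - \<theta>) * Pw r r powr \<theta>"
proof -
  define pt where "pt q = exp ((1 - q) * ln r1 + q * ln r)" for q
  define G where "G q = Pw (pt q) (pt q)" for q
  have lnle: "ln r1 \<le> ln r" using r1 r by simp
  have pt_in: "pt q \<in> {0<..r}" if "0 \<le> q" "q \<le> 1" for q
  proof -
    have "(1 - q) * ln r1 + q * ln r \<le> (1 - q) * ln r + q * ln r"
      using that lnle by (intro add_right_mono mult_left_mono) auto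
    then have "(1 - q) * ln r1 + q * ln r \<le> ln r" by (simp add: algebra_simps)
    then have "pt q \<le> exp (ln r)" unfolding pt_def by simp
    then show ?thesis using r by (simp add: pt_def)
  qed
  have pt0: "pt 0 = r1" and pt1: "pt 1 = r" using r1 r by (auto simp: pt_def)
  have Gc: "continuous_on {0..1} G"
    unfolding G_def
    by (rule continuous_on_compose2[OF gg_cont]) (use pt_in in \<open>auto simp: pt_def intro!: continuous_intros\<close>)
  have Gnn: "0 \<le> G q" if "0 \<le> q" "q \<le> 1" for q
    unfolding G_def by (rule Pw_nonneg) (use pt_in[OF that] in auto)
  have mid: "G ((q1 + q2) / 2) ^ 2 \<le> G q1 * G q2" if "0 \<le> q1" "q1 \<le> 1" "0 \<le> q2" "q2 \<le> 1" for q1 q2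
  proof -
    have p1: "pt q1 \<in> {0<..r}" and p2: "pt q2 \<in> {0<..r}" using pt_in that by auto
    have "pt ((q1 + q2) / 2) = sqrt (pt q1 * pt q2)"
    proof (rule real_sqrt_unique[symmetric])
      show "(pt ((q1 + q2) / 2))^2 = pt q1 * pt q2"
        unfolding pt_def by (simp add: power2_eq_square exp_add[symmetric] field_simps)
    qed (simp add: pt_def)
    then have "G ((q1 + q2) / 2) = Pw (pt q1) (pt q2)"
      using pair_eq[of "pt q1" "pt q2"] p1 p2 by (simp add: G_def)
    moreover have "(Pw (pt q1) (pt q2))^2 \<le> Pw (pt q1) (pt q1) * Pw (pt q2) (pt q2)"
      by (rule pair_CS) (use p1 p2 in auto)
    ultimately show ?thesis by (simp add: G_def)
  qed
  have dy: "G (real j / 2^k) ^ (2^k) \<le> G 0 ^ (2^k - j) * G 1 ^ j" if "j \<le> 2^k" for k j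
    by (rule dyadic_ineq[OF _ mid that]) (use Gnn in auto)
  have "G \<theta> \<le> G 0 powr (1 - \<theta>) * G 1 powr \<theta>"
    by (rule dyadic_limit[OF Gc _ dy th]) (use Gnn in auto)
  then have "Pw (pt \<theta>) (pt \<theta>) \<le> Pw r1 r1 powr (1 - \<theta>) * Pw r r powr \<theta>"
    unfolding G_def pt0 pt1 .
  then show ?thesis by (simp only: pt_def)
qed

end

lemma scale_int:
  fixes F :: "'a::euclidean_space \<Rightarrow> real"
  assumes cont: "continuous_on UNIV F" and supp: "\<And>x. x \<notin> cball 0 1 \<Longrightarrow> F x = 0" and s: "0 < s"
  shows "((\<lambda>y. F (y /\<^sub>R s)) has_integral (s ^ DIM('a) * integral UNIV F)) UNIV"
proof -
  obtain c where box: "cball (0::'a) 1 \<subseteq> cbox (-c) c"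
    using bounded_subset_cbox_symmetric[OF bounded_cball] by blast
  have "F integrable_on cbox (-c) c" using cont by (auto intro: integrable_continuous continuous_on_subset)
  then have hI: "(F has_integral integral UNIV F) (cbox (-c) c)"
    using cbox_UNIV_int(1)[OF cont supp box] by (metis integrable_integral)
  from has_integral_affinity[OF hI, of "1/s" 0] s
  have h2: "((\<lambda>y. F (y /\<^sub>R s)) has_integral (s ^ DIM('a) * integral UNIV F)) ((\<lambda>x. s *\<^sub>R x) ` cbox (-c) c)"
    by (simp add: power_one_over divide_inverse_commute power_inverse)
  show ?thesis
  proof (rule has_integral_on_superset[OF h2])
    fix y assume "y \<notin> (\<lambda>x. s *\<^sub>R x) ` cbox (-c) c"
    moreover have "y = s *\<^sub>R (y /\<^sub>R s)" using s by simp
    ultimately have "y /\<^sub>R s \<notin> cbox (-c) c" by (metis image_eqI)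
    then show "F (y /\<^sub>R s) = 0" using box supp by blast
  qed auto
qed

lemma Wt_int:
  fixes u :: "'a::euclidean_space \<Rightarrow> real"
  assumes harm: "harmonic_on (ball 0 r) u" and r: "0 < r" and AB: "-1 < A" "A < B" "B < 1"
    and s: "0 < s" "s \<le> r"
  shows "((\<lambda>y. phi A B ((y /\<^sub>R s) \<bullet> (y /\<^sub>R s)) * (u y)^2) has_integral (s ^ DIM('a) * Pw u A B s s)) UNIV"
    and "continuous_on UNIV (\<lambda>y. phi A B ((y /\<^sub>R s) \<bullet> (y /\<^sub>R s)) * (u y)^2)"
proof -
  define F where "F x = phi A B (x \<bullet> x) * u (s *\<^sub>R x) * u (s *\<^sub>R x)" for x :: 'a
  have sl: "\<bar>s\<bar> \<le> r" using s by simp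
  have Fc: "continuous_on UNIV F" unfolding F_def by (rule pair_cont[OF harm r AB sl sl])
  have Fs: "F x = 0" if "x \<notin> cball 0 1" for x unfolding F_def by (rule pair_supp[OF harm r AB that])
  have FI: "integral UNIV F = Pw u A B s s"
    unfolding F_def by (rule integral_unique[OF pair_int[OF harm r AB sl sl]])
  have eq: "F (y /\<^sub>R s) = phi A B ((y /\<^sub>R s) \<bullet> (y /\<^sub>R s)) * (u y)^2" for y
    using s by (simp add: F_def power2_eq_square)
  show "((\<lambda>y. phi A B ((y /\<^sub>R s) \<bullet> (y /\<^sub>R s)) * (u y)^2) has_integral (s ^ DIM('a) * Pw u A B s s)) UNIV"
    using scale_int[OF Fc Fs s(1)] by (simp add: eq FI)
  have "continuous_on UNIV (\<lambda>y. F (y /\<^sub>R s))"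
    by (rule continuous_on_compose2[OF Fc]) (auto intro!: continuous_intros)
  then show "continuous_on UNIV (\<lambda>y. phi A B ((y /\<^sub>R s) \<bullet> (y /\<^sub>R s)) * (u y)^2)" by (simp add: eq)
qed

lemma Wt_ineq:
  fixes u :: "'a::euclidean_space \<Rightarrow> real"
  assumes harm: "harmonic_on (ball 0 r3) u" and AB: "-1 < A" "A < B" "B < 1"
    and r: "0 < r1" "r1 < r2" "r2 < r3"
  defines "\<alpha> \<equiv> (ln r3 - ln r2) / (ln r3 - ln r1)"
  shows "r2 ^ DIM('a) * Pw u A B r2 r2 \<le> (r1 ^ DIM('a) * Pw u A B r1 r1) powr \<alpha> * (r3 ^ DIM('a) * Pw u A B r3 r3) powr (1 - \<alpha>)"
proof -
  have r3: "0 < r3" using r by simp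
  have l: "ln r1 < ln r2" "ln r2 < ln r3" using r by auto
  have a: "0 < \<alpha>" "\<alpha> < 1" using l by (auto simp: \<alpha>_def divide_less_eq)
  have aa: "\<alpha> * (ln r3 - ln r1) = ln r3 - ln r2" using l by (simp add: \<alpha>_def)
  have lin: "\<alpha> * ln r1 + (1 - \<alpha>) * ln r3 = ln r2"
  proof -
    have "\<alpha> * ln r1 + (1 - \<alpha>) * ln r3 = ln r3 - \<alpha> * (ln r3 - ln r1)" by (simp add: algebra_simps)
    then show ?thesis using aa by simp
  qed
  have e: "exp ((1 - (1 - \<alpha>)) * ln r1 + (1 - \<alpha>) * ln r3) = r2"
  proof -
    have "(1 - (1 - \<alpha>)) * ln r1 + (1 - \<alpha>) * ln r3 = ln r2"
      using lin by simp
    then show ?thesis using r by simp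
  qed
  have g: "Pw u A B r2 r2 \<le> Pw u A B r1 r1 powr \<alpha> * Pw u A B r3 r3 powr (1 - \<alpha>)"
    using gg_logconv[OF harm r3 AB r(1) _ _ _, of "1 - \<alpha>"] r a e by simp
  define n where "n = DIM('a)"
  have pn: "r2 ^ n = (r1 ^ n) powr \<alpha> * (r3 ^ n) powr (1 - \<alpha>)"
  proof -
    have "ln ((r1 ^ n) powr \<alpha> * (r3 ^ n) powr (1 - \<alpha>)) = real n * (\<alpha> * ln r1 + (1 - \<alpha>) * ln r3)"
      using r by (simp add: ln_mult ln_powr ln_realpow algebra_simps)
    also have "\<alpha> * ln r1 + (1 - \<alpha>) * ln r3 = ln r2" by (rule lin)
    finally have "ln ((r1 ^ n) powr \<alpha> * (r3 ^ n) powr (1 - \<alpha>)) = ln (r2 ^ n)"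
      by (simp add: ln_realpow)
    then show ?thesis using r by (subst (asm) ln_inj_iff) auto
  qed
  have nn1: "0 \<le> Pw u A B r1 r1" and nn3: "0 \<le> Pw u A B r3 r3"
    using Pw_nonneg[OF harm r3 AB] r by auto
  have "r2 ^ n * Pw u A B r2 r2 \<le> r2 ^ n * (Pw u A B r1 r1 powr \<alpha> * Pw u A B r3 r3 powr (1 - \<alpha>))"
    using g r by (intro mult_left_mono) auto
  also have "\<dots> = (r1 ^ n * Pw u A B r1 r1) powr \<alpha> * (r3 ^ n * Pw u A B r3 r3) powr (1 - \<alpha>)"
    unfolding pn using r nn1 nn3 by (simp add: powr_mult)
  finally show ?thesis by (simp add: n_def)
qed

definition Am :: "nat \<Rightarrow> real" where "Am m = 1 - 2 / (real m + 3)"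
definition Bm :: "nat \<Rightarrow> real" where "Bm m = 1 - 1 / (real m + 3)"

lemma AmBm: "-1 < Am m" "Am m < Bm m" "Bm m < 1"
  unfolding Am_def Bm_def by (auto simp: field_simps)

lemma Wm_lim:
  fixes u :: "'a::euclidean_space \<Rightarrow> real"
  assumes harm: "harmonic_on (ball 0 r3) u" and si: "set_integrable lborel (ball 0 r3) (\<lambda>x. (u x)^2)"
    and s: "0 < s" "s \<le> r3"
  shows "(\<lambda>m. s ^ DIM('a) * Pw u (Am m) (Bm m) s s) \<longlonglongrightarrow> (LINT x:ball 0 s|lborel. (u x)^2)"
proof -
  have r3: "0 < r3" using s by simp
  define fm where "fm m y = phi (Am m) (Bm m) ((y /\<^sub>R s) \<bullet> (y /\<^sub>R s)) * (u y)^2" for m y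
  define w where "w y = indicator (ball 0 r3) y *\<^sub>R (u y)^2" for y :: 'a
  define f where "f y = indicator (ball 0 s) y *\<^sub>R (u y)^2" for y :: 'a
  have wi: "integrable lborel w" using si unfolding set_integrable_def w_def .
  have sub: "ball (0::'a) s \<subseteq> ball 0 r3" using s(2) by (rule subset_ball)
  have fi: "integrable lborel f"
    using set_integrable_subset[OF si _ sub] unfolding set_integrable_def f_def by auto
  have out: "fm m y = 0" if "y \<notin> ball 0 s" for m y
  proof -
    have ny: "norm (y /\<^sub>R s) = norm y / s" using s by (simp add: divide_inverse_commute)
    have "1 \<le> norm y / s" using that s by (simp add: le_divide_eq)
    then have "1 \<le> norm (y /\<^sub>R s)" using ny by simp
    then have "1 \<le> (y /\<^sub>R s) \<bullet> (y /\<^sub>R s)"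
      by (metis one_le_power power2_norm_eq_inner)
    then have "Bm m \<le> (y /\<^sub>R s) \<bullet> (y /\<^sub>R s)" using AmBm(3)[of m] by linarith
    then show ?thesis by (simp add: fm_def phi_zero[OF AmBm(2)])
  qed
  have fmc: "continuous_on UNIV (fm m)" for m
    unfolding fm_def by (rule Wt_int(2)[OF harm r3 AmBm s])
  have fmm: "fm m \<in> borel_measurable lborel" for m
    using borel_measurable_continuous_onI[OF fmc] by simp
  have bound: "norm (fm m y) \<le> w y" for m y
  proof (cases "y \<in> ball 0 s")
    case True
    then have "y \<in> ball 0 r3" using s by auto
    moreover have "\<bar>phi (Am m) (Bm m) ((y /\<^sub>R s) \<bullet> (y /\<^sub>R s))\<bar> \<le> 1" using phi_bounds by (simp add: abs_le_iff)
    ultimately show ?thesis unfolding fm_def w_def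
      by (simp add: abs_mult) (metis mult_left_le_one_le zero_le_power2 abs_ge_zero)
  next
    case False
    then show ?thesis using out[OF False] by (simp add: w_def)
  qed
  have fmi: "integrable lborel (fm m)" for m
    by (rule Bochner_Integration.integrable_bound[OF wi fmm]) (intro AE_I2, rule order_trans[OF bound], simp)
  have eqW: "s ^ DIM('a) * Pw u (Am m) (Bm m) s s = integral\<^sup>L lborel (fm m)" for m
  proof -
    have "(fm m has_integral (s ^ DIM('a) * Pw u (Am m) (Bm m) s s)) UNIV"
      unfolding fm_def by (rule Wt_int(1)[OF harm r3 AmBm s])
    moreover have "(fm m has_integral integral\<^sup>L lborel (fm m)) UNIV"
      by (rule has_integral_integral_lborel[OF fmi])
    ultimately show ?thesis using has_integral_unique by blast
  qed
  have conv: "(\<lambda>m. fm m y) \<longlonglongrightarrow> f y" for y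
  proof (cases "y \<in> ball 0 s")
    case True
    define t where "t = (y /\<^sub>R s) \<bullet> (y /\<^sub>R s)"
    have ny: "norm (y /\<^sub>R s) = norm y / s" using s by (simp add: divide_inverse_commute)
    have "norm y / s < 1" using True s by (simp add: divide_less_eq)
    then have "norm (y /\<^sub>R s) < 1" using ny by simp
    then have "(norm (y /\<^sub>R s))^2 < 1" by (simp add: abs_square_less_1)
    then have t1: "t < 1" unfolding t_def power2_norm_eq_inner[symmetric] .
    obtain N :: nat where N: "2 / (1 - t) < real N" using reals_Archimedean2 by blast
    have "fm m y = (u y)^2" if "N \<le> m" for m
    proof -
      have "2 / (1 - t) < real m + 3" using N that by linarith
      then have "2 < (real m + 3) * (1 - t)" using t1 by (simp add: divide_less_eq mult.commute)
      then have "t \<le> Am m" unfolding Am_def by (simp add: field_simps)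
      then have "phi (Am m) (Bm m) t = 1" by (rule phi_one[OF AmBm(2)])
      then show ?thesis unfolding fm_def t_def[symmetric] by simp
    qed
    then have "(\<lambda>m. fm m y) \<longlonglongrightarrow> (u y)^2"
      by (intro tendsto_eventually) (auto simp: eventually_sequentially)
    then show ?thesis using True by (simp add: f_def)
  next
    case False
    then show ?thesis using out[OF False] by (simp add: f_def)
  qed
  have "(\<lambda>m. integral\<^sup>L lborel (fm m)) \<longlonglongrightarrow> integral\<^sup>L lborel f"
    by (rule integral_dominated_convergence[OF borel_measurable_integrable[OF fi] fmm wi])
       (use bound in \<open>auto intro!: AE_I2 simp: conv\<close>)
  then show ?thesis unfolding eqW set_lebesgue_integral_def f_def .
qed

lemma part_i:
  fixes u :: "'a::euclidean_space \<Rightarrow> real"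
  assumes harm: "harmonic_on (ball 0 r3) u" and si: "set_integrable lborel (ball 0 r3) (\<lambda>x. (u x)^2)"
    and r: "0 < r1" "r1 < r2" "r2 < r3"
  defines "\<alpha> \<equiv> (ln r3 - ln r2) / (ln r3 - ln r1)"
  shows "L2_ball u r2 \<le> L2_ball u r1 powr \<alpha> * L2_ball u r3 powr (1 - \<alpha>)"
proof -
  have l: "ln r1 < ln r2" "ln r2 < ln r3" using r by auto
  have a: "0 < \<alpha>" "\<alpha> < 1" using l by (auto simp: \<alpha>_def divide_less_eq)
  define I where "I s = (LINT x:ball 0 s|lborel. (u x)^2)" for s
  define W where "W m s = s ^ DIM('a) * Pw u (Am m) (Bm m) s s" for m s
  have r3: "0 < r3" using r by simp
  have lim: "(\<lambda>m. W m s) \<longlonglongrightarrow> I s" if "0 < s" "s \<le> r3" for s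
    unfolding W_def I_def by (rule Wm_lim[OF harm si that])
  have Wnn: "0 \<le> W m s" if "0 < s" "s \<le> r3" for m s
    unfolding W_def using Pw_nonneg[OF harm r3 AmBm, of s m] that by simp
  have Inn: "0 \<le> I s" if "0 < s" "s \<le> r3" for s
    by (rule LIMSEQ_le_const[OF lim[OF that]]) (use Wnn that in auto)
  have ineq: "W m r2 \<le> W m r1 powr \<alpha> * W m r3 powr (1 - \<alpha>)" for m
    unfolding W_def \<alpha>_def by (rule Wt_ineq[OF harm AmBm r])
  have L1: "(\<lambda>m. W m r1) \<longlonglongrightarrow> I r1" and L2: "(\<lambda>m. W m r2) \<longlonglongrightarrow> I r2" and L3: "(\<lambda>m. W m r3) \<longlonglongrightarrow> I r3"
    using lim r by auto
  have R: "(\<lambda>m. W m r1 powr \<alpha> * W m r3 powr (1 - \<alpha>)) \<longlonglongrightarrow> I r1 powr \<alpha> * I r3 powr (1 - \<alpha>)"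
    by (intro tendsto_mult tendsto_powr'[OF L1 tendsto_const] tendsto_powr'[OF L3 tendsto_const])
       (use a Wnn r in auto)
  have main: "I r2 \<le> I r1 powr \<alpha> * I r3 powr (1 - \<alpha>)"
    by (rule LIMSEQ_le[OF L2 R]) (use ineq in auto)
  have i1: "0 \<le> I r1" and i3: "0 \<le> I r3" using Inn r by auto
  have "L2_ball u r2 = sqrt (I r2)" by (simp add: L2_ball_def I_def)
  also have "\<dots> \<le> sqrt (I r1 powr \<alpha> * I r3 powr (1 - \<alpha>))" using main by simp
  also have "\<dots> = sqrt (I r1 powr \<alpha>) * sqrt (I r3 powr (1 - \<alpha>))" by (simp add: real_sqrt_mult)
  also have "\<dots> = sqrt (I r1) powr \<alpha> * sqrt (I r3) powr (1 - \<alpha>)"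
    using i1 i3 by (simp add: powr_half_sqrt[symmetric] powr_powr mult.commute)
  also have "\<dots> = L2_ball u r1 powr \<alpha> * L2_ball u r3 powr (1 - \<alpha>)" by (simp add: L2_ball_def I_def)
  finally show ?thesis .
qed

definition zc :: "'a::euclidean_space \<Rightarrow> 'a \<Rightarrow> 'a \<Rightarrow> complex" where
  "zc e1 e2 x = of_real (x \<bullet> e1) + \<i> * of_real (x \<bullet> e2)"

lemma zc_deriv: "(zc e1 e2 has_derivative zc e1 e2) (at x)"
proof -
  have "linear (zc e1 e2)"
    by (rule linearI) (simp_all add: zc_def inner_add_left algebra_simps scaleR_conv_of_real)
  then have "bounded_linear (zc e1 e2)" by (simp add: linear_conv_bounded_linear)
  then show ?thesis by (rule bounded_linear_imp_has_derivative)
qed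

lemma zc_cont: "continuous_on UNIV (zc e1 e2)"
  unfolding zc_def by (intro continuous_intros)

lemma pgen_deriv:
  "((\<lambda>x. Re (c * zc e1 e2 x ^ j)) has_derivative (\<lambda>h. Re (c * (of_nat j * zc e1 e2 h * zc e1 e2 x ^ (j - 1))))) (at x)"
  by (intro has_derivative_Re has_derivative_mult_right has_derivative_power zc_deriv)

lemma pgen_pd:
  "partial_deriv (\<lambda>x. Re (c * zc e1 e2 x ^ j)) b = (\<lambda>x. Re ((c * of_nat j * zc e1 e2 b) * zc e1 e2 x ^ (j - 1)))"
proof
  fix x
  have "frechet_derivative (\<lambda>x. Re (c * zc e1 e2 x ^ j)) (at x) = (\<lambda>h. Re (c * (of_nat j * zc e1 e2 h * zc e1 e2 x ^ (j - 1))))"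
    by (rule frechet_derivative_at[OF pgen_deriv, symmetric])
  then show "partial_deriv (\<lambda>x. Re (c * zc e1 e2 x ^ j)) b x = Re ((c * of_nat j * zc e1 e2 b) * zc e1 e2 x ^ (j - 1))"
    by (simp add: partial_deriv_def mult.assoc)
qed

lemma pgen_diff: "(\<lambda>x. Re (c * zc e1 e2 x ^ j)) differentiable_on S"
  by (rule differentiable_at_imp_differentiable_on) (rule differentiableI[OF pgen_deriv])

lemma pgen_cont: "continuous_on S (\<lambda>x. Re (c * zc e1 e2 x ^ j))"
  by (intro continuous_intros continuous_on_subset[OF zc_cont]) auto

lemma zc_sq_sum:
  assumes "e1 \<in> Basis" "e2 \<in> Basis" "e1 \<noteq> e2"
  shows "(\<Sum>b\<in>Basis. zc e1 e2 b * zc e1 e2 b) = 0"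
proof (rule complex_eqI)
  have "Re (\<Sum>b\<in>Basis. zc e1 e2 b * zc e1 e2 b) = (\<Sum>b\<in>Basis. (e1 \<bullet> b) * (e1 \<bullet> b)) - (\<Sum>b\<in>Basis. (e2 \<bullet> b) * (e2 \<bullet> b))"
    by (simp add: Re_sum zc_def sum_subtractf inner_commute)
  also have "\<dots> = e1 \<bullet> e1 - e2 \<bullet> e2" by (simp add: euclidean_inner[symmetric])
  also have "\<dots> = 0" using assms by simp
  finally show "Re (\<Sum>b\<in>Basis. zc e1 e2 b * zc e1 e2 b) = Re 0" by simp
  have "Im (\<Sum>b\<in>Basis. zc e1 e2 b * zc e1 e2 b) = 2 * (\<Sum>b\<in>Basis. (e1 \<bullet> b) * (e2 \<bullet> b))"
    by (simp add: Im_sum zc_def sum_distrib_left inner_commute algebra_simps)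
  also have "\<dots> = 2 * (e1 \<bullet> e2)" by (simp add: euclidean_inner[symmetric])
  also have "\<dots> = 0" using assms by (simp add: inner_Basis)
  finally show "Im (\<Sum>b\<in>Basis. zc e1 e2 b * zc e1 e2 b) = Im 0" by simp
qed

lemma uk_harm:
  assumes "e1 \<in> Basis" "e2 \<in> Basis" "e1 \<noteq> e2"
  shows "harmonic_on UNIV (\<lambda>x. Re (1 * zc e1 e2 x ^ k))"
  unfolding harmonic_on_def
proof (intro conjI ballI)
  show "(\<lambda>x. Re (1 * zc e1 e2 x ^ k)) differentiable_on UNIV" by (rule pgen_diff)
  fix b :: 'a assume b: "b \<in> Basis"
  show "partial_deriv (\<lambda>x. Re (1 * zc e1 e2 x ^ k)) b differentiable_on UNIV"
    unfolding pgen_pd by (rule pgen_diff)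
  fix c :: 'a assume "c \<in> Basis"
  show "continuous_on UNIV (partial_deriv (partial_deriv (\<lambda>x. Re (1 * zc e1 e2 x ^ k)) b) c)"
    unfolding pgen_pd by (rule pgen_cont)
next
  fix x :: 'a
  have "laplacian (\<lambda>x. Re (1 * zc e1 e2 x ^ k)) x
     = (\<Sum>b\<in>Basis. Re ((of_nat k * of_nat (k - 1) * zc e1 e2 x ^ (k - 1 - 1)) * (zc e1 e2 b * zc e1 e2 b)))"
    unfolding laplacian_def pgen_pd by (simp add: algebra_simps)
  also have "\<dots> = Re ((of_nat k * of_nat (k - 1) * zc e1 e2 x ^ (k - 1 - 1)) * (\<Sum>b\<in>Basis. zc e1 e2 b * zc e1 e2 b))"
    by (simp add: Re_sum sum_distrib_left)
  also have "\<dots> = 0" using zc_sq_sum[OF assms] by simp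
  finally show "laplacian (\<lambda>x. Re (1 * zc e1 e2 x ^ k)) x = 0" .
qed simp

lemma L2_scale:
  fixes f :: "'a::euclidean_space \<Rightarrow> real"
  assumes fc: "continuous_on UNIV f" and hom: "\<And>x. f (r *\<^sub>R x) = r ^ k * f x" and r: "0 < r"
  shows "(LINT x:ball 0 r|lborel. (f x)^2) = r ^ (2 * k + DIM('a)) * (LINT x:ball 0 1|lborel. (f x)^2)"
proof -
  have fm[measurable]: "f \<in> borel_measurable borel" by (rule borel_measurable_continuous_onI[OF fc])
  define g where "g x = indicator (ball 0 r) x *\<^sub>R (f x)^2" for x :: 'a
  have f2m: "(\<lambda>x. (f x)^2) \<in> borel_measurable borel"
    by (rule borel_measurable_continuous_onI) (intro continuous_intros fc)
  have im: "(indicator (ball 0 r) :: 'a \<Rightarrow> real) \<in> borel_measurable borel"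
    by (rule borel_measurable_indicator) simp
  have gm[measurable]: "g \<in> borel_measurable borel" unfolding g_def by (rule borel_measurable_scaleR[OF im f2m])
  define T where "T x = 0 + r *\<^sub>R x" for x :: 'a
  have Tm[measurable]: "T \<in> borel_measurable borel" unfolding T_def
    by (rule borel_measurable_continuous_onI) (intro continuous_intros)
  have eq: "lborel = density (distr lborel borel T) (\<lambda>_. \<bar>r\<bar> ^ DIM('a))"
    unfolding T_def using lborel_affine[of r 0] r by simp
  have "integral\<^sup>L lborel g = integral\<^sup>L (density (distr lborel borel T) (\<lambda>_. \<bar>r\<bar> ^ DIM('a))) g"
    using arg_cong[of _ _ "\<lambda>M. integral\<^sup>L M g", OF eq] .
  also have "\<dots> = integral\<^sup>L (distr lborel borel T) (\<lambda>x. \<bar>r\<bar> ^ DIM('a) *\<^sub>R g x)"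
    by (rule integral_density) auto
  also have "\<dots> = integral\<^sup>L lborel (\<lambda>x. \<bar>r\<bar> ^ DIM('a) *\<^sub>R g (T x))"
    by (rule integral_distr) auto
  also have "\<dots> = integral\<^sup>L lborel (\<lambda>x. r ^ (2 * k + DIM('a)) * (indicator (ball 0 1) x *\<^sub>R (f x)^2))"
  proof (rule Bochner_Integration.integral_cong[OF refl])
    fix x :: 'a
    have i: "indicator (ball 0 r) (r *\<^sub>R x) = (indicator (ball 0 1) x :: real)"
      using r by (simp add: indicator_def)
    show "\<bar>r\<bar> ^ DIM('a) *\<^sub>R g (T x) = r ^ (2 * k + DIM('a)) * (indicator (ball 0 1) x *\<^sub>R (f x)^2)"
      using r unfolding g_def T_def by (simp add: i hom power_mult_distrib power_add power_mult algebra_simps)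
  qed
  also have "\<dots> = r ^ (2 * k + DIM('a)) * integral\<^sup>L lborel (\<lambda>x. indicator (ball 0 1) x *\<^sub>R (f x)^2)"
    by simp
  finally show ?thesis unfolding set_lebesgue_integral_def g_def .
qed

lemma pos_int:
  fixes f :: "'a::euclidean_space \<Rightarrow> real"
  assumes fc: "continuous_on UNIV f" and x0: "x0 \<in> ball 0 1" and f0: "f x0 \<noteq> 0"
  shows "0 < (LINT x:ball 0 1|lborel. (f x)^2)"
proof -
  have fm[measurable]: "f \<in> borel_measurable borel" by (rule borel_measurable_continuous_onI[OF fc])
  have "\<forall>e>0. \<exists>d>0. \<forall>x'. dist x' x0 < d \<longrightarrow> dist (f x') (f x0) < e"
    using fc unfolding continuous_on_iff by blast
  moreover have "0 < \<bar>f x0\<bar> / 2" using f0 by simp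
  ultimately obtain d where d: "0 < d" and dd: "\<And>x. dist x x0 < d \<Longrightarrow> dist (f x) (f x0) < \<bar>f x0\<bar> / 2"
    by blast
  define e where "e = min d (1 - norm x0)"
  have e: "0 < e" using d x0 by (auto simp: e_def)
  have sub: "ball x0 e \<subseteq> ball 0 1"
  proof
    fix x assume "x \<in> ball x0 e"
    then have "norm (x - x0) < 1 - norm x0" by (auto simp: e_def dist_norm norm_minus_commute)
    then show "x \<in> ball 0 1" using norm_triangle_ineq[of "x - x0" x0] by auto
  qed
  define m0 where "m0 = (f x0 / 2)^2"
  have m0: "0 < m0" using f0 by (simp add: m0_def)
  have low: "indicator (ball x0 e) x * m0 \<le> indicator (ball 0 1) x *\<^sub>R (f x)^2" for x
  proof (cases "x \<in> ball x0 e")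
    case True
    then have "dist x x0 < d" by (auto simp: e_def dist_commute)
    then have "\<bar>f x - f x0\<bar> < \<bar>f x0\<bar> / 2" using dd by (simp add: dist_real_def)
    then have "\<bar>f x0\<bar> / 2 \<le> \<bar>f x\<bar>" by linarith
    then have "(\<bar>f x0\<bar> / 2)^2 \<le> \<bar>f x\<bar>^2" by (rule power_mono) simp
    then have "m0 \<le> (f x)^2" by (simp add: m0_def power_divide)
    then show ?thesis using True sub by auto
  next
    case False
    then show ?thesis by simp
  qed
  have i1: "integrable lborel (\<lambda>x. indicator (ball x0 e) x * m0)"
    by (intro integrable_mult_left integrable_real_indicator) (use emeasure_lborel_ball_finite[of x0 e] in \<open>auto simp: top_unique\<close>)
  have ic: "integrable lborel (\<lambda>x. indicator (cball (0::'a) 1) x *\<^sub>R (f x)^2)"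
    by (rule borel_integrable_compact) (auto intro!: continuous_intros continuous_on_subset[OF fc])
  have i2: "integrable lborel (\<lambda>x. indicator (ball 0 1) x *\<^sub>R (f x)^2)"
    by (rule Bochner_Integration.integrable_bound[OF ic]) (auto intro!: AE_I2 simp: indicator_def)
  have "0 < measure lborel (ball x0 e) * m0" using content_ball_pos[OF e] m0 by simp
  also have "\<dots> = integral\<^sup>L lborel (\<lambda>x. indicator (ball x0 e) x * m0)" by simp
  also have "\<dots> \<le> integral\<^sup>L lborel (\<lambda>x. indicator (ball 0 1) x *\<^sub>R (f x)^2)"
    by (rule integral_mono[OF i1 i2 low])
  finally show ?thesis unfolding set_lebesgue_integral_def .
qed

lemma part_ii:
  fixes r1 r2 r3 :: real
  assumes dim: "2 \<le> DIM('a::euclidean_space)" and r: "0 < r1" "r1 < r2" "r2 < r3"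
  defines "\<alpha> \<equiv> (ln r3 - ln r2) / (ln r3 - ln r1)"
  shows "\<not> (\<exists>\<alpha>' C. \<alpha>' > \<alpha> \<and> C > 0 \<and>
        (\<forall>u :: 'a \<Rightarrow> real. harmonic_on UNIV u \<longrightarrow>
           L2_ball u r2 \<le> C * L2_ball u r1 powr \<alpha>' * L2_ball u r3 powr (1 - \<alpha>')))"
proof
  assume "\<exists>\<alpha>' C. \<alpha>' > \<alpha> \<and> C > 0 \<and> (\<forall>u :: 'a \<Rightarrow> real. harmonic_on UNIV u \<longrightarrow>
           L2_ball u r2 \<le> C * L2_ball u r1 powr \<alpha>' * L2_ball u r3 powr (1 - \<alpha>'))"
  then obtain \<alpha>' C where a': "\<alpha> < \<alpha>'" and C: "0 < C" and H: "\<And>u :: 'a \<Rightarrow> real. harmonic_on UNIV u \<Longrightarrow>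
           L2_ball u r2 \<le> C * L2_ball u r1 powr \<alpha>' * L2_ball u r3 powr (1 - \<alpha>')" by blast
  obtain e1 :: 'a where e1: "e1 \<in> Basis" using nonempty_Basis by blast
  have "Basis - {e1} \<noteq> {}"
  proof
    assume "Basis - {e1} = {}"
    then have "Basis \<subseteq> {e1}" by blast
    then have "card (Basis :: 'a set) \<le> card {e1}" by (rule card_mono[rotated]) simp
    then show False using dim by simp
  qed
  then obtain e2 :: 'a where e2: "e2 \<in> Basis" "e2 \<noteq> e1" by blast
  define uk where "uk k = (\<lambda>x::'a. Re (1 * zc e1 e2 x ^ k))" for k
  define J where "J k = (LINT x:ball 0 1|lborel. (uk k x)^2)" for k
  define n where "n = DIM('a)"
  have ukc: "continuous_on UNIV (uk k)" for k unfolding uk_def by (rule pgen_cont)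
  have hom: "uk k (s *\<^sub>R x) = s ^ k * uk k x" for k s x
  proof -
    have "zc e1 e2 (s *\<^sub>R x) = of_real s * zc e1 e2 x" by (simp add: zc_def algebra_simps)
    then have "zc e1 e2 (s *\<^sub>R x) ^ k = of_real (s ^ k) * zc e1 e2 x ^ k" by (simp add: power_mult_distrib)
    then show ?thesis by (simp add: uk_def)
  qed
  have Jpos: "0 < J k" for k
  proof -
    have z: "zc e1 e2 ((1/2) *\<^sub>R e1) = of_real (1/2)" using e1 e2 by (simp add: zc_def inner_Basis)
    have "uk k ((1/2) *\<^sub>R e1) = (1/2)^k"
      unfolding uk_def z of_real_power[symmetric] by (simp only: mult_1 Re_complex_of_real)
    moreover have "(1/2::real) *\<^sub>R e1 \<in> ball 0 1" using e1 by simp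
    ultimately show ?thesis unfolding J_def by (intro pos_int[OF ukc, of "(1/2) *\<^sub>R e1"]) auto
  qed
  have L2: "L2_ball (uk k) s = sqrt (s ^ (2 * k + n) * J k)" if "0 < s" for k s
    unfolding L2_ball_def J_def n_def using L2_scale[OF ukc hom that] by simp
  have lnL2: "ln (L2_ball (uk k) s) = (real (2 * k + n) * ln s + ln (J k)) / 2" if "0 < s" for k s
    using that Jpos[of k] by (simp add: L2 ln_sqrt ln_mult ln_realpow)
  have L2pos: "0 < L2_ball (uk k) s" if "0 < s" for k s using that Jpos[of k] by (simp add: L2)
  have l: "ln r1 < ln r2" "ln r2 < ln r3" using r by auto
  have aa: "\<alpha> * (ln r3 - ln r1) = ln r3 - ln r2" using l by (simp add: \<alpha>_def)
  define D where "D = ln r2 - \<alpha>' * ln r1 - (1 - \<alpha>') * ln r3"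
  have D: "0 < D"
  proof -
    have "D = (\<alpha>' - \<alpha>) * (ln r3 - ln r1)" using aa by (simp add: D_def algebra_simps)
    then show ?thesis using a' l by simp
  qed
  have bound: "real (2 * k + n) / 2 * D \<le> ln C" for k
  proof -
    have harm: "harmonic_on UNIV (uk k)" unfolding uk_def by (rule uk_harm[OF e1 e2(1) e2(2)[symmetric]])
    have p1: "0 < L2_ball (uk k) r1" and p2: "0 < L2_ball (uk k) r2" and p3: "0 < L2_ball (uk k) r3"
      using L2pos r by auto
    have "ln (L2_ball (uk k) r2) \<le> ln (C * L2_ball (uk k) r1 powr \<alpha>' * L2_ball (uk k) r3 powr (1 - \<alpha>'))"
      using H[OF harm] p1 p2 p3 C by (subst ln_le_cancel_iff) auto
    also have "\<dots> = ln C + \<alpha>' * ln (L2_ball (uk k) r1) + (1 - \<alpha>') * ln (L2_ball (uk k) r3)"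
      using p1 p3 C by (simp add: ln_mult ln_powr)
    finally have LL: "ln (L2_ball (uk k) r2) \<le> ln C + \<alpha>' * ln (L2_ball (uk k) r1) + (1 - \<alpha>') * ln (L2_ball (uk k) r3)" .
    define M where "M = real (2 * k + n)"
    define L where "L = ln (J k)"
    have X0: "(M * ln r2 + L) / 2 \<le> ln C + \<alpha>' * ((M * ln r1 + L) / 2) + (1 - \<alpha>') * ((M * ln r3 + L) / 2)"
      using LL lnL2 r unfolding M_def L_def by simp
    have id: "ln C + \<alpha>' * ((M * ln r1 + L) / 2) + (1 - \<alpha>') * ((M * ln r3 + L) / 2)
        = ln C + M / 2 * (\<alpha>' * ln r1 + (1 - \<alpha>') * ln r3) + L / 2"
      by (simp add: field_simps)
    have Y: "M / 2 * D = M / 2 * ln r2 - M / 2 * (\<alpha>' * ln r1 + (1 - \<alpha>') * ln r3)"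
      by (simp add: D_def algebra_simps)
    have Z: "(M * ln r2 + L) / 2 = M / 2 * ln r2 + L / 2" by (simp add: field_simps)
    show ?thesis using X0 id Y Z unfolding M_def by linarith
  qed
  obtain k :: nat where k: "ln C / D < real k" using reals_Archimedean2 by blast
  have "ln C < real k * D" using k D by (simp add: divide_less_eq)
  also have "\<dots> \<le> real (2 * k + n) / 2 * D" using D by (intro mult_right_mono) auto
  also have "\<dots> \<le> ln C" by (rule bound)
  finally show False by simp
qed

theorem theorem2p1:
  fixes r1 r2 r3 :: real
  assumes dim: "DIM('a::euclidean_space) = 2 \<or> DIM('a) = 3"
    and r: "0 < r1" "r1 < r2" "r2 < r3"
  defines "\<alpha> \<equiv> (ln r3 - ln r2) / (ln r3 - ln r1)"
  shows "0 < \<alpha> \<and> \<alpha> < 1 \<and>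
    (\<forall>u :: 'a \<Rightarrow> real. harmonic_on (ball 0 r3) u \<longrightarrow>
        set_integrable lborel (ball 0 r3) (\<lambda>x. (u x)^2) \<longrightarrow>
        L2_ball u r2 \<le> L2_ball u r1 powr \<alpha> * L2_ball u r3 powr (1 - \<alpha>)) \<and>
    \<not> (\<exists>\<alpha>' C. \<alpha>' > \<alpha> \<and> C > 0 \<and>
        (\<forall>u :: 'a \<Rightarrow> real. harmonic_on UNIV u \<longrightarrow>
           L2_ball u r2 \<le> C * L2_ball u r1 powr \<alpha>' * L2_ball u r3 powr (1 - \<alpha>')))"
proof (intro conjI allI impI)
  have l: "ln r1 < ln r2" "ln r2 < ln r3" using r by auto
  show "0 < \<alpha>" "\<alpha> < 1" using l by (auto simp: \<alpha>_def divide_less_eq)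
next
  fix u :: "'a \<Rightarrow> real"
  assume "harmonic_on (ball 0 r3) u" "set_integrable lborel (ball 0 r3) (\<lambda>x. (u x)^2)"
  then show "L2_ball u r2 \<le> L2_ball u r1 powr \<alpha> * L2_ball u r3 powr (1 - \<alpha>)"
    unfolding \<alpha>_def by (rule part_i[OF _ _ r])
next
  have "2 \<le> DIM('a)" using dim by auto
  then show "\<not> (\<exists>\<alpha>' C. \<alpha>' > \<alpha> \<and> C > 0 \<and>
        (\<forall>u :: 'a \<Rightarrow> real. harmonic_on UNIV u \<longrightarrow>
           L2_ball u r2 \<le> C * L2_ball u r1 powr \<alpha>' * L2_ball u r3 powr (1 - \<alpha>')))"
    unfolding \<alpha>_def by (rule part_ii[OF _ r])
qed

end
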